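(* Let $M$ be a commutative monoid with identity $e$ and $\mathcal{A}$ an $\mathbb{H}M$-module. Then for every $n\ge0$ the group $H^n(M,1;\mathcal{A})$ is isomorphic to the $n$-th cohomology group of the cochain complex $C(M,1;\mathcal{A})$ defined as follows: $C^0(M,1;\mathcal{A})=\mathcal{A}(e)$; for $n\ge1$, $C^n(M,1;\mathcal{A})$ is the abelian group (pointwise addition) of functions $f:M^n\to\bigcup_{x\in M}\mathcal{A}(x)$ with $f(x_1,\dots,x_n)\in\mathcal{A}(x_1\cdots x_n)$ and $f(x_1,\dots,x_n)=0$ whenever some $x_i=e$; $\partial^0=0$; and for $n\ge1$, $(\partial^nf)(x_1,\dots,x_{n+1})=x_{1*}f(x_2,\dots,x_{n+1})+\sum_{i=1}^n(-1)^if(x_1,\dots,x_ix_{i+1},\dots,x_{n+1})+(-1)^{n+1}x_{n+1*}f(x_1,\dots,x_n)$.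
   Context: Let $M$ be a commutative monoid with identity $e$. $\mathbb{H}M$ is the category with objects the elements of $M$ and morphisms $(x,y):x\to xy$, composition $(xy,z)(x,y)=(x,yz)$. An $\mathbb{H}M$-module $\mathcal{A}$ is a functor $\mathbb{H}M\to\mathbf{Ab}$: abelian groups $\mathcal{A}(x)$ with homomorphisms $y_*:\mathcal{A}(x)\to\mathcal{A}(xy)$, $y_*z_*=(yz)_*$, $e_*=\mathrm{id}$. Tensor product: $(\mathcal{A}\otimes_{\mathbb{H}M}\mathcal{B})(x)$ is the quotient of $\bigoplus_{zt=x}\mathcal{A}(z)\otimes\mathcal{B}(t)$ by the relations $u_*a\otimes b=a\otimes u_*b$, with $y_*(a\otimes b)=y_*a\otimes b$; unit the constant module $\mathbb{Z}$. Nonnegative chain complexes of $\mathbb{H}M$-modules form a symmetric monoidal category (graded tensor product, Leibniz differential, Koszul sign symmetry). A commutative DGA-algebra over $\mathbb{H}M$ is a commutative monoid $(\mathcal{A},\circ,\iota:\mathbb{Z}\to\mathcal{A})$ in it with a monoid morphism $\epsilon:\mathcal{A}\to\mathbb{Z}$; write $\epsilon_x(a)=\tilde\epsilon(a)\cdot x$ with $\tilde\epsilon(a)\in\mathbb{Z}$. Bar construction: $\bar{\mathcal{A}}=\mathrm{coker}\,\iota$. $\mathbf{B}(\mathcal{A})_n(x)$ is generated by $[\,]$ (in degree $0$, with $\mathbf{B}(\mathcal{A})_0\cong\mathbb{Z}$) and by symbols $[a_1|\cdots|a_p]$, $p\ge1$, $a_i\in\bar{\mathcal{A}}_{r_i}(x_i)$,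 $x_1\cdots x_p=x$, $p+\sum r_i=n$ (i.e. $\mathbf{B}(\mathcal{A})=\bigoplus_p$ of the $p$-fold tensor powers over $\mathbb{H}M$ of the suspension of $\bar{\mathcal{A}}$), with differential $\partial[a_1|\cdots|a_p]=-\sum_i(-1)^{e_{i-1}}[a_1|\cdots|\partial a_i|\cdots|a_p]+\tilde\epsilon(a_1)x_{1*}[a_2|\cdots|a_p]+\sum_{i=1}^{p-1}(-1)^{e_i}[a_1|\cdots|a_i\circ a_{i+1}|\cdots|a_p]+(-1)^{e_p}\tilde\epsilon(a_p)x_{p*}[a_1|\cdots|a_{p-1}]$, $e_i=i+r_1+\dots+r_i$; multiplication the shuffle product $[a_1|\cdots|a_p]\circ[a_{p+1}|\cdots|a_{p+q}]=\sum_\sigma(-1)^{e(\sigma)}[a_{\sigma^{-1}(1)}|\cdots|a_{\sigma^{-1}(p+q)}]$ over $(p,q)$-shuffles, $e(\sigma)=\sum(1+r_i)(1+r_{p+j})$ over pairs with $\sigma(i)>\sigma(p+j)$; unit $[\,]$; augmentation the isomorphism $\mathbf{B}(\mathcal{A})_0\cong\mathbb{Z}$. $\mathbf{B}(\mathcal{A})$ is again a commutative DGA-algebra over $\mathbb{H}M$, so $\mathbf{B}^r$ is defined. $\mathcal{Z}M$: the $\mathbb{H}M$-module with $\mathcal{Z}M(x)$ free abelian on pairs $(u,v)\in M^2$ with $uv=x$, $y_*(u,v)=(yu,v)$, multiplication $(u,v)\circ(w,t)=(uw,vt)$, unit $(e,e)$, concentrated in degree $0$, augmentation $(u,v)\mapsto$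 generator of $\mathbb{Z}(x)$. For $r\ge1$: $H^n(M,r;\mathcal{A})=H^n(\mathrm{Hom}_{\mathbb{H}M}(\mathbf{B}^r(\mathcal{Z}M),\mathcal{A}))$. *)

theory Defs
  imports "HOL-Algebra.Algebra" "HOL-Algebra.Free_Abelian_Groups"
begin

text \<open>The commutative monoid M is a type of class comm_monoid_mult; its identity e is 1.
An HM-module is a family of abelian groups A x (all with elements in one ambient type)
together with maps act x y : A x -> A (x*y) (the map y_* starting at x).\<close>

definition HM_module :: "('m::comm_monoid_mult \<Rightarrow> 'a monoid) \<Rightarrow> ('m \<Rightarrow> 'm \<Rightarrow> 'a \<Rightarrow> 'a) \<Rightarrow> bool" where
  "HM_module A act \<longleftrightarrow>
     (\<forall>x. comm_group (A x)) \<and>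
     (\<forall>x y. act x y \<in> hom (A x) (A (x * y))) \<and>
     (\<forall>x a. a \<in> carrier (A x) \<longrightarrow> act x 1 a = a) \<and>
     (\<forall>x y z a. a \<in> carrier (A x) \<longrightarrow> act (x * y) z (act x y a) = act x (y * z) a)"

definition cohomology :: "(nat \<Rightarrow> 'g monoid) \<Rightarrow> (nat \<Rightarrow> 'g \<Rightarrow> 'g) \<Rightarrow> nat \<Rightarrow> 'g set monoid" where
  "cohomology G d n =
     ((G n)\<lparr>carrier := kernel (G n) (G (Suc n)) (d n)\<rparr>) Mod
       (if n = 0 then {\<one>\<^bsub>G 0\<^esub>} else d (n - 1) ` carrier (G (n - 1)))"

definition ZM :: "'m::comm_monoid_mult \<Rightarrow> (('m \<times> 'm) \<Rightarrow>\<^sub>0 int) monoid" where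
  "ZM x = free_Abelian_group {(u, v). u * v = x}"

definition ZM_act :: "'m::comm_monoid_mult \<Rightarrow> (('m \<times> 'm) \<Rightarrow>\<^sub>0 int) \<Rightarrow> (('m \<times> 'm) \<Rightarrow>\<^sub>0 int)" where
  "ZM_act y a = frag_extend (\<lambda>(u, v). frag_of (y * u, v)) a"

definition ZM_mult :: "(('m::comm_monoid_mult \<times> 'm) \<Rightarrow>\<^sub>0 int) \<Rightarrow> (('m \<times> 'm) \<Rightarrow>\<^sub>0 int) \<Rightarrow> (('m \<times> 'm) \<Rightarrow>\<^sub>0 int)" where
  "ZM_mult a b = frag_extend (\<lambda>p. frag_extend (\<lambda>q. frag_of (fst p * fst q, snd p * snd q)) b) a"

definition ZM_eps :: "(('m::comm_monoid_mult \<times> 'm) \<Rightarrow>\<^sub>0 int) \<Rightarrow> int" where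
  "ZM_eps a = (\<Sum>p\<in>Poly_Mapping.keys a. Poly_Mapping.lookup a p)"

text \<open>A word of length n is a list [(z_1,a_1),...,(z_n,a_n)] with a_i in ZM(z_i); it stands
for the symbol [a_1|...|a_n] in degree x = z_1 ... z_n. Since ZM is concentrated in degree 0,
B(ZM)_n is the n-fold tensor power over HM of coker(iota). B(ZM)_n(x) is realised as the quotient
of the free abelian group on words of length n and degree x by: additivity in each slot
(Z-multilinearity), the HM-relations u_* a_i (x) a_(i+1) = a_i (x) u_* a_(i+1) between adjacent
slots, and the degenerate words (some a_i in the image of iota, i.e. a_i = (z_i, e)),
which gives the tensor power of coker(iota). For n = 0 there is only the empty word [],
in every degree x, so B_0 = the constant module Z.\<close>

type_synonym 'm bword = "('m \<times> (('m \<times> 'm) \<Rightarrow>\<^sub>0 int)) list"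

definition bwords :: "nat \<Rightarrow> 'm::comm_monoid_mult \<Rightarrow> 'm bword set" where
  "bwords n x = {w. length w = n \<and> (\<forall>(z, a) \<in> set w. a \<in> carrier (ZM z)) \<and>
                    (n = 0 \<or> prod_list (map fst w) = x)}"

definition bfree :: "nat \<Rightarrow> 'm::comm_monoid_mult \<Rightarrow> ('m bword \<Rightarrow>\<^sub>0 int) monoid" where
  "bfree n x = free_Abelian_group (bwords n x)"

definition brels :: "nat \<Rightarrow> 'm::comm_monoid_mult \<Rightarrow> ('m bword \<Rightarrow>\<^sub>0 int) set" where
  "brels n x =
     {frag_of (w[i := (fst (w!i), a + b)]) - frag_of (w[i := (fst (w!i), a)]) - frag_of (w[i := (fst (w!i), b)])
        | w i a b. w \<in> bwords n x \<and> i < n \<and> a \<in> carrier (ZM (fst (w!i))) \<and> b \<in> carrier (ZM (fst (w!i)))}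
   \<union> {frag_of (w[i := (u * fst (w!i), ZM_act u (snd (w!i)))])
        - frag_of (w[Suc i := (u * fst (w!Suc i), ZM_act u (snd (w!Suc i)))])
        | w i u. length w = n \<and> (\<forall>(z, a) \<in> set w. a \<in> carrier (ZM z)) \<and> Suc i < n \<and>
                 u * prod_list (map fst w) = x}
   \<union> {frag_of w | w. w \<in> bwords n x \<and> (\<exists>i<n. snd (w!i) = frag_of (fst (w!i), 1))}"

definition bsub :: "nat \<Rightarrow> 'm::comm_monoid_mult \<Rightarrow> ('m bword \<Rightarrow>\<^sub>0 int) set" where
  "bsub n x = generate (bfree n x) (brels n x)"

definition BZM :: "nat \<Rightarrow> 'm::comm_monoid_mult \<Rightarrow> ('m bword \<Rightarrow>\<^sub>0 int) set monoid" where
  "BZM n x = bfree n x Mod bsub n x"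

definition bclass :: "nat \<Rightarrow> 'm::comm_monoid_mult \<Rightarrow> ('m bword \<Rightarrow>\<^sub>0 int) \<Rightarrow> ('m bword \<Rightarrow>\<^sub>0 int) set" where
  "bclass n x r = bsub n x #>\<^bsub>bfree n x\<^esub> r"

definition act_word :: "'m::comm_monoid_mult \<Rightarrow> 'm bword \<Rightarrow> 'm bword" where
  "act_word y w = (if w = [] then [] else (y * fst (hd w), ZM_act y (snd (hd w))) # tl w)"

definition BZM_act :: "nat \<Rightarrow> 'm::comm_monoid_mult \<Rightarrow> 'm \<Rightarrow> ('m bword \<Rightarrow>\<^sub>0 int) set \<Rightarrow> ('m bword \<Rightarrow>\<^sub>0 int) set" where
  "BZM_act n x y c = bclass n (x * y) (frag_extend (\<lambda>w. frag_of (act_word y w)) (SOME r. r \<in> c))"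

text \<open>The bar differential on a word [a_1|...|a_n] (n >= 1, all r_i = 0 so e_i = i and the
internal-differential term vanishes):
 eps(a_1) x_1* [a_2|...|a_n] + sum_(i=1)^(n-1) (-1)^i [...|a_i o a_(i+1)|...]
   + (-1)^n eps(a_n) x_n* [a_1|...|a_(n-1)].\<close>
definition bar_diff_word :: "'m::comm_monoid_mult bword \<Rightarrow> ('m bword \<Rightarrow>\<^sub>0 int)" where
  "bar_diff_word w =
     frag_cmul (ZM_eps (snd (hd w))) (frag_of (act_word (fst (hd w)) (tl w)))
     + (\<Sum>i\<in>{1..<length w}. frag_cmul ((-1) ^ i)
          (frag_of (take (i - 1) w @ [(fst (w!(i-1)) * fst (w!i), ZM_mult (snd (w!(i-1))) (snd (w!i)))] @ drop (Suc i) w)))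
     + frag_cmul ((-1) ^ length w * ZM_eps (snd (last w)))
          (frag_of (act_word (fst (last w)) (butlast w)))"

definition BZM_diff :: "nat \<Rightarrow> 'm::comm_monoid_mult \<Rightarrow> ('m bword \<Rightarrow>\<^sub>0 int) set \<Rightarrow> ('m bword \<Rightarrow>\<^sub>0 int) set" where
  "BZM_diff n x c = bclass (n - 1) x (frag_extend bar_diff_word (SOME r. r \<in> c))"

definition HomB :: "('m::comm_monoid_mult \<Rightarrow> 'a monoid) \<Rightarrow> ('m \<Rightarrow> 'm \<Rightarrow> 'a \<Rightarrow> 'a) \<Rightarrow> nat
                     \<Rightarrow> ('m \<Rightarrow> ('m bword \<Rightarrow>\<^sub>0 int) set \<Rightarrow> 'a) monoid" where
  "HomB A act n =
     \<lparr>carrier = {\<phi>. (\<forall>x. \<phi> x \<in> hom (BZM n x) (A x) \<and> \<phi> x \<in> extensional (carrier (BZM n x))) \<and>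
                    (\<forall>x y c. c \<in> carrier (BZM n x) \<longrightarrow> \<phi> (x * y) (BZM_act n x y c) = act x y (\<phi> x c))},
      monoid.mult = (\<lambda>\<phi> \<psi> x c. if c \<in> carrier (BZM n x) then \<phi> x c \<otimes>\<^bsub>A x\<^esub> \<psi> x c else undefined),
      one = (\<lambda>x c. if c \<in> carrier (BZM n x) then \<one>\<^bsub>A x\<^esub> else undefined)\<rparr>"

definition HomB_diff :: "('m::comm_monoid_mult \<Rightarrow> 'a monoid) \<Rightarrow> nat
                     \<Rightarrow> ('m \<Rightarrow> ('m bword \<Rightarrow>\<^sub>0 int) set \<Rightarrow> 'a) \<Rightarrow> ('m \<Rightarrow> ('m bword \<Rightarrow>\<^sub>0 int) set \<Rightarrow> 'a)" where
  "HomB_diff A n \<phi> = (\<lambda>x c. if c \<in> carrier (BZM (Suc n) x) then \<phi> x (BZM_diff (Suc n) x c) else undefined)"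

definition H_M1 :: "('m::comm_monoid_mult \<Rightarrow> 'a monoid) \<Rightarrow> ('m \<Rightarrow> 'm \<Rightarrow> 'a \<Rightarrow> 'a) \<Rightarrow> nat
                     \<Rightarrow> ('m \<Rightarrow> ('m bword \<Rightarrow>\<^sub>0 int) set \<Rightarrow> 'a) set monoid" where
  "H_M1 A act n = cohomology (HomB A act) (\<lambda>k. HomB_diff A k) n"

text \<open>C^n: functions on n-tuples (lists of length n) with f(xs) in A(x_1...x_n), vanishing when some
x_i = e (undefined off length n). For n = 0 this is A(e).\<close>
definition Ccoch :: "('m::comm_monoid_mult \<Rightarrow> 'a monoid) \<Rightarrow> nat \<Rightarrow> ('m list \<Rightarrow> 'a) monoid" where
  "Ccoch A n =
     \<lparr>carrier = {f. (\<forall>xs. length xs = n \<longrightarrow>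
                        f xs \<in> carrier (A (prod_list xs)) \<and> (1 \<in> set xs \<longrightarrow> f xs = \<one>\<^bsub>A (prod_list xs)\<^esub>)) \<and>
                   (\<forall>xs. length xs \<noteq> n \<longrightarrow> f xs = undefined)},
      monoid.mult = (\<lambda>f g xs. if length xs = n then f xs \<otimes>\<^bsub>A (prod_list xs)\<^esub> g xs else undefined),
      one = (\<lambda>xs. if length xs = n then \<one>\<^bsub>A (prod_list xs)\<^esub> else undefined)\<rparr>"

definition Cdiff :: "('m::comm_monoid_mult \<Rightarrow> 'a monoid) \<Rightarrow> ('m \<Rightarrow> 'm \<Rightarrow> 'a \<Rightarrow> 'a) \<Rightarrow> nat
                       \<Rightarrow> ('m list \<Rightarrow> 'a) \<Rightarrow> ('m list \<Rightarrow> 'a)" where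
  "Cdiff A act n f =
     (if n = 0 then \<one>\<^bsub>Ccoch A 1\<^esub>
      else (\<lambda>xs. if length xs = Suc n then
              act (prod_list (tl xs)) (hd xs) (f (tl xs))
              \<otimes>\<^bsub>A (prod_list xs)\<^esub>
              (\<Otimes>\<^bsub>A (prod_list xs)\<^esub> i\<in>{1..n}.
                  f (take (i - 1) xs @ [xs!(i-1) * xs!i] @ drop (Suc i) xs) [^]\<^bsub>A (prod_list xs)\<^esub> ((-1::int) ^ i))
              \<otimes>\<^bsub>A (prod_list xs)\<^esub>
              (act (prod_list (butlast xs)) (last xs) (f (butlast xs)) [^]\<^bsub>A (prod_list xs)\<^esub> ((-1::int) ^ Suc n))
            else undefined))"

definition C_M1 :: "('m::comm_monoid_mult \<Rightarrow> 'a monoid) \<Rightarrow> ('m \<Rightarrow> 'm \<Rightarrow> 'a \<Rightarrow> 'a) \<Rightarrow> nat \<Rightarrow> ('m list \<Rightarrow> 'a) set monoid" where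
  "C_M1 A act n = cohomology (Ccoch A) (Cdiff A act) n"

end

theory Submission
  imports Defs
begin

lemma frag_extend_extend:
  "frag_extend f (frag_extend g a) = frag_extend (\<lambda>p. frag_extend f (g p)) a"
  by (induction a rule: frag_induction[OF subset_UNIV]) (auto simp: frag_extend_diff)

lemma frag_extend_add_fun:
  "frag_extend (\<lambda>p. f p + g p) a = frag_extend f a + frag_extend g a"
  by (induction a rule: frag_induction[OF subset_UNIV]) (auto simp: frag_extend_diff)

lemma frag_extend_diff_fun:
  "frag_extend (\<lambda>p. f p - g p) a = frag_extend f a - frag_extend g a"
  by (induction a rule: frag_induction[OF subset_UNIV]) (auto simp: frag_extend_diff)

lemma frag_cmul_diff2: "frag_cmul c (x - y) = frag_cmul c x - frag_cmul c y"
  by (simp add: poly_mapping_eqI lookup_minus right_diff_distrib)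

lemma frag_extend_cmul_fun:
  "frag_extend (\<lambda>p. frag_cmul c (f p)) a = frag_cmul c (frag_extend f a)"
  by (induction a rule: frag_induction[OF subset_UNIV]) (auto simp: frag_extend_diff frag_cmul_diff2)

lemma frag_extend_zero_fun [simp]: "frag_extend (\<lambda>p. 0) a = 0"
  by (simp add: frag_extend_eq_0)

lemma frag_extend_sum_fun:
  "finite I \<Longrightarrow> frag_extend (\<lambda>p. \<Sum>i\<in>I. f i p) a = (\<Sum>i\<in>I. frag_extend (f i) a)"
  by (induction I rule: finite_induct) (auto simp: frag_extend_add_fun)

lemma frag_extend_swap:
  "frag_extend (\<lambda>p. frag_extend (G p) Y) a = frag_extend (\<lambda>k. frag_extend (\<lambda>p. G p k) a) Y"
proof (induction a rule: frag_induction[OF subset_UNIV])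
  case 1 then show ?case by simp
next
  case (2 x) then show ?case by simp
next
  case (3 a b) then show ?case by (simp add: frag_extend_diff frag_extend_diff_fun)
qed

lemma frag_cmul_sum_left:
  "frag_cmul (\<Sum>i\<in>I. c i) Y = (\<Sum>i\<in>I. frag_cmul (c i) Y)"
  by (induction I rule: infinite_finite_induct) (auto simp: frag_cmul_distrib)

lemma frag_extend_const:
  assumes "\<And>p. p \<in> Poly_Mapping.keys a \<Longrightarrow> f p = Y"
  shows "frag_extend f a = frag_cmul (ZM_eps a) Y"
  using assms by (simp add: frag_extend_def ZM_eps_def frag_cmul_sum_left)

lemma frag_extend_cong_keys:
  "(\<And>p. p \<in> Poly_Mapping.keys a \<Longrightarrow> f p = g p) \<Longrightarrow> frag_extend f a = frag_extend g a"
  by (rule frag_extend_eq)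

lemma keys_frag_extend_sub:
  "(\<And>p. p \<in> Poly_Mapping.keys a \<Longrightarrow> Poly_Mapping.keys (f p) \<subseteq> S) \<Longrightarrow> Poly_Mapping.keys (frag_extend f a) \<subseteq> S"
  using keys_frag_extend by fastforce

lemma carrier_ZM: "a \<in> carrier (ZM z) \<longleftrightarrow> Poly_Mapping.keys a \<subseteq> {(u, v). u * v = z}"
  by (simp add: ZM_def)
lemma ZM_act_of [simp]: "ZM_act y (frag_of (u, v)) = frag_of (y * u, v)"
  by (simp add: ZM_act_def)

lemma ZM_act_alt: "ZM_act y a = frag_extend (\<lambda>p. frag_of (y * fst p, snd p)) a"
  unfolding ZM_act_def by (simp add: split_def)
lemma ZM_act_carrier:
  assumes "a \<in> carrier (ZM z)" shows "ZM_act y a \<in> carrier (ZM (y * z))"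
  using assms unfolding carrier_ZM ZM_act_alt
  apply (intro keys_frag_extend_sub)
  apply (auto simp: mult.assoc)
  done
lemma ZM_act_one: "ZM_act 1 a = a"
  unfolding ZM_act_alt by (simp add: frag_expansion[symmetric])
lemma ZM_act_act: "ZM_act y (ZM_act y' a) = ZM_act (y * y') a"
  unfolding ZM_act_alt frag_extend_extend by (simp add: mult.assoc)
lemma ZM_mult_carrier:
  assumes "a \<in> carrier (ZM z)" "b \<in> carrier (ZM z')" shows "ZM_mult a b \<in> carrier (ZM (z * z'))"
  unfolding carrier_ZM ZM_mult_def
proof (intro keys_frag_extend_sub)
  fix p q assume pq: "p \<in> Poly_Mapping.keys a" "q \<in> Poly_Mapping.keys b"
  obtain u v u' v' where pq': "p = (u, v)" "q = (u', v')" by fastforce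
  have "u * v = z" "u' * v' = z'" using assms pq pq' by (auto simp: carrier_ZM)
  then show "Poly_Mapping.keys (frag_of (fst p * fst q, snd p * snd q)) \<subseteq> {(u, v). u * v = z * z'}"
    using pq' by (auto simp: mult_ac)
qed

lemma ZM_add_carrier:
  assumes "a \<in> carrier (ZM z)" "b \<in> carrier (ZM z)" shows "a + b \<in> carrier (ZM z)"
  using assms keys_add[of a b] unfolding carrier_ZM by blast

lemma ZM_act_add: "ZM_act y (a + b) = ZM_act y a + ZM_act y b"
  by (simp add: ZM_act_def frag_extend_add)

lemma ZM_mult_of [simp]: "ZM_mult (frag_of (u, v)) (frag_of (u', v')) = frag_of (u * u', v * v')"
  by (simp add: ZM_mult_def)

lemma ZM_eps_of [simp]: "ZM_eps (frag_of p) = 1"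
  by (simp add: ZM_eps_def)

definition pL :: "(('m::comm_monoid_mult \<times> 'm) \<Rightarrow>\<^sub>0 int) \<Rightarrow> (('m \<times> 'm list) \<Rightarrow>\<^sub>0 int) \<Rightarrow> (('m \<times> 'm list) \<Rightarrow>\<^sub>0 int)" where
  "pL a Q = frag_extend (\<lambda>p. frag_extend (\<lambda>k. frag_of (fst p * fst k, snd p # snd k)) Q) a"

fun Tw :: "(('m::comm_monoid_mult \<times> 'm) \<Rightarrow>\<^sub>0 int) list \<Rightarrow> (('m \<times> 'm list) \<Rightarrow>\<^sub>0 int)" where
  "Tw [] = frag_of (1, [])"
| "Tw (a # as) = pL a (Tw as)"

definition Nz :: "(('m::comm_monoid_mult \<times> 'm list) \<Rightarrow>\<^sub>0 int) \<Rightarrow> (('m \<times> 'm list) \<Rightarrow>\<^sub>0 int)" where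
  "Nz Q = frag_extend (\<lambda>k. if 1 \<in> set (snd k) then 0 else frag_of k) Q"

definition Uy :: "'m::comm_monoid_mult \<Rightarrow> (('m \<times> 'm list) \<Rightarrow>\<^sub>0 int) \<Rightarrow> (('m \<times> 'm list) \<Rightarrow>\<^sub>0 int)" where
  "Uy y Q = frag_extend (\<lambda>k. frag_of (y * fst k, snd k)) Q"

lemma pL_add1: "pL (a + b) Q = pL a Q + pL b Q"
  by (simp add: pL_def frag_extend_add)

lemma pL_add2: "pL a (Q + Y) = pL a Q + pL a Y"
  by (simp add: pL_def frag_extend_add frag_extend_add_fun)

lemma pL_of: "pL (frag_of p) (frag_of k) = frag_of (fst p * fst k, snd p # snd k)"
  by (simp add: pL_def)

lemma pL_act1: "pL (ZM_act u a) Q = Uy u (pL a Q)"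
  unfolding pL_def ZM_act_alt Uy_def frag_extend_extend
  by (simp add: mult.assoc)

lemma pL_Uy2: "pL a (Uy u Q) = Uy u (pL a Q)"
  unfolding pL_def Uy_def frag_extend_extend
  by (simp add: mult_ac)

lemma Nz_add: "Nz (Q + Y) = Nz Q + Nz Y"
  by (simp add: Nz_def frag_extend_add)

lemma Nz_pL: "Nz (pL a Q) = Nz (pL a (Nz Q))"
  unfolding pL_def Nz_def frag_extend_extend
  by (intro frag_extend_eq) (simp add: frag_extend_extend if_distrib[of "frag_extend _"] cong: if_cong)

lemma Nz_pL_deg: "Nz (pL (frag_of (z, 1)) Q) = 0"
  unfolding pL_def Nz_def frag_extend_extend by simp

lemma Nz_Uy: "Nz (Uy y Q) = Uy y (Nz Q)"
  unfolding Uy_def Nz_def frag_extend_extend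
  by (intro frag_extend_eq) (auto simp: frag_extend_extend)

lemma Tw_update_add:
  "i < length as \<Longrightarrow> Tw (as[i := a + b]) = Tw (as[i := a]) + Tw (as[i := b])"
proof (induction as arbitrary: i)
  case Nil then show ?case by simp
next
  case (Cons c as)
  then show ?case by (cases i) (auto simp: pL_add1 pL_add2)
qed

lemma Tw_update_act:
  "i < length as \<Longrightarrow> Tw (as[i := ZM_act u (as!i)]) = Uy u (Tw as)"
proof (induction as arbitrary: i)
  case Nil then show ?case by simp
next
  case (Cons c as)
  then show ?case by (cases i) (auto simp: pL_act1 pL_Uy2)
qed

lemma Nz_Tw_deg:
  "i < length as \<Longrightarrow> as!i = frag_of (z, 1) \<Longrightarrow> Nz (Tw as) = 0"
proof (induction as arbitrary: i)
  case Nil then show ?case by simp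
next
  case (Cons c as)
  then show ?case
  proof (cases i)
    case 0 then show ?thesis using Cons by (simp add: Nz_pL_deg)
  next
    case (Suc j) then show ?thesis using Cons by (simp, subst Nz_pL, simp add: pL_def Nz_def)
  qed
qed

section \<open>Words and normal forms\<close>

definition gen :: "'m::comm_monoid_mult list \<Rightarrow> 'm bword" where
  "gen vs = map (\<lambda>v. (v, frag_of (1, v))) vs"

definition Nw :: "'m::comm_monoid_mult \<Rightarrow> 'm bword \<Rightarrow> (('m \<times> 'm list) \<Rightarrow>\<^sub>0 int)" where
  "Nw x w = (if w = [] then frag_of (x, []) else Nz (Tw (map snd w)))"

definition NN :: "'m::comm_monoid_mult \<Rightarrow> ('m bword \<Rightarrow>\<^sub>0 int) \<Rightarrow> (('m \<times> 'm list) \<Rightarrow>\<^sub>0 int)" where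
  "NN x r = frag_extend (Nw x) r"

definition Ew :: "('m::comm_monoid_mult \<times> 'm list) \<Rightarrow> ('m bword \<Rightarrow>\<^sub>0 int)" where
  "Ew k = frag_of (act_word (fst k) (gen (snd k)))"

definition EE :: "(('m::comm_monoid_mult \<times> 'm list) \<Rightarrow>\<^sub>0 int) \<Rightarrow> ('m bword \<Rightarrow>\<^sub>0 int)" where
  "EE Q = frag_extend Ew Q"

definition Kset :: "nat \<Rightarrow> 'm::comm_monoid_mult \<Rightarrow> ('m \<times> 'm list) set" where
  "Kset n x = {k. length (snd k) = n \<and> 1 \<notin> set (snd k) \<and> fst k * prod_list (snd k) = x}"

lemma keys_pL:
  assumes "Poly_Mapping.keys a \<subseteq> A" "Poly_Mapping.keys Q \<subseteq> B"
  shows "Poly_Mapping.keys (pL a Q) \<subseteq> (\<lambda>(p, k). (fst p * fst k, snd p # snd k)) ` (A \<times> B)"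
  unfolding pL_def
proof (intro keys_frag_extend_sub)
  fix p k assume "p \<in> Poly_Mapping.keys a" "k \<in> Poly_Mapping.keys Q"
  then have "(p, k) \<in> A \<times> B" using assms by blast
  then show "Poly_Mapping.keys (frag_of (fst p * fst k, snd p # snd k)) \<subseteq> (\<lambda>(p, k). (fst p * fst k, snd p # snd k)) ` (A \<times> B)"
    by force
qed

lemma keys_Nz: "Poly_Mapping.keys (Nz Q) \<subseteq> {k \<in> Poly_Mapping.keys Q. 1 \<notin> set (snd k)}"
  unfolding Nz_def by (intro keys_frag_extend_sub) auto

lemma keys_Uy: "Poly_Mapping.keys (Uy y Q) \<subseteq> (\<lambda>k. (y * fst k, snd k)) ` Poly_Mapping.keys Q"
  unfolding Uy_def by (intro keys_frag_extend_sub) auto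

lemma keys_Tw:
  assumes "\<forall>(z, a) \<in> set w. a \<in> carrier (ZM z)"
  shows "Poly_Mapping.keys (Tw (map snd w)) \<subseteq>
           {k. length (snd k) = length w \<and> fst k * prod_list (snd k) = prod_list (map fst w)}"
  using assms
proof (induction w)
  case Nil then show ?case by simp
next
  case (Cons c w)
  obtain z a where c: "c = (z, a)" by fastforce
  have a: "Poly_Mapping.keys a \<subseteq> {p. fst p * snd p = z}"
    using Cons.prems c by (auto simp: carrier_ZM)
  have IH: "Poly_Mapping.keys (Tw (map snd w)) \<subseteq>
           {k. length (snd k) = length w \<and> fst k * prod_list (snd k) = prod_list (map fst w)}"
    using Cons by auto
  show ?case
    using keys_pL[OF a IH] c by (auto simp: mult_ac)
qed

lemma Tw_gen: "Tw (map snd (gen vs)) = frag_of (1, vs)"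
  by (induction vs) (auto simp: gen_def pL_of)

lemma Tw_act_word: "w \<noteq> [] \<Longrightarrow> Tw (map snd (act_word y w)) = Uy y (Tw (map snd w))"
  by (cases w) (auto simp: act_word_def pL_act1)

lemma Nw_act_word: "Nw (x * y) (act_word y w) = Uy y (Nw x w)"
proof (cases w)
  case Nil then show ?thesis by (simp add: Nw_def act_word_def Uy_def mult.commute[of x y])
next
  case (Cons c w') then show ?thesis by (simp add: Nw_def act_word_def pL_act1 Nz_Uy)
qed

lemma bwords_Cons:
  "(c # w) \<in> bwords (Suc n) x \<longleftrightarrow>
     snd c \<in> carrier (ZM (fst c)) \<and> w \<in> bwords n (prod_list (map fst w)) \<and> x = fst c * prod_list (map fst w)"
  by (cases c) (auto simp: bwords_def)

lemma bwords_prod: "w \<in> bwords n x \<Longrightarrow> w \<noteq> [] \<Longrightarrow> prod_list (map fst w) = x"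
  by (auto simp: bwords_def)

lemma keys_Nw:
  assumes "w \<in> bwords n x" shows "Poly_Mapping.keys (Nw x w) \<subseteq> Kset n x"
proof (cases "w = []")
  case True then show ?thesis using assms by (auto simp: Nw_def Kset_def bwords_def)
next
  case False
  have w: "\<forall>(z, a) \<in> set w. a \<in> carrier (ZM z)" "length w = n" "prod_list (map fst w) = x"
    using assms False by (auto simp: bwords_def)
  show ?thesis using False keys_Nz[of "Tw (map snd w)"] keys_Tw[OF w(1)] w(2,3)
    by (auto simp: Nw_def Kset_def)
qed

lemma keys_NN:
  assumes "r \<in> carrier (bfree n x)" shows "Poly_Mapping.keys (NN x r) \<subseteq> Kset n x"
  unfolding NN_def
  apply (rule keys_frag_extend_sub)
  apply (rule keys_Nw)
  using assms by (auto simp: bfree_def)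

lemma gen_Cons: "gen (v # vs) = (v, frag_of (1, v)) # gen vs"
  by (simp add: gen_def)
lemma gen_Nil [simp]: "gen [] = []"
  by (simp add: gen_def)
lemma gen_eq_Nil [simp]: "gen vs = [] \<longleftrightarrow> vs = []"
  by (simp add: gen_def)
lemma length_gen [simp]: "length (gen vs) = length vs"
  by (simp add: gen_def)
lemma prod_gen [simp]: "prod_list (map fst (gen vs)) = prod_list vs"
  by (induction vs) (auto simp: gen_def)
lemma act_word_gen_Cons: "act_word U (gen (v # vs)) = (U * v, frag_of (U, v)) # gen vs"
  by (simp add: gen_def act_word_def)
lemma gen_carrier: "\<forall>(z, a) \<in> set (gen vs). a \<in> carrier (ZM z)"
  by (auto simp: gen_def carrier_ZM)

lemma act_word_gen_bwords:
  assumes "k \<in> Kset n x" shows "act_word (fst k) (gen (snd k)) \<in> bwords n x"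
proof -
  obtain U vs where k: "k = (U, vs)" by fastforce
  show ?thesis
  proof (cases vs)
    case Nil then show ?thesis using assms k by (simp add: Kset_def bwords_def act_word_def)
  next
    case (Cons v vs')
    then show ?thesis using assms k gen_carrier[of vs']
      by (auto simp: Kset_def bwords_def act_word_gen_Cons carrier_ZM mult_ac)
  qed
qed

lemma EE_carrier:
  assumes "Poly_Mapping.keys Q \<subseteq> Kset n x" shows "EE Q \<in> carrier (bfree n x)"
  unfolding EE_def bfree_def Ew_def carrier_free_Abelian_group_iff
proof (rule keys_frag_extend_sub)
  fix k assume "k \<in> Poly_Mapping.keys Q"
  then have "k \<in> Kset n x" using assms by blast
  then show "Poly_Mapping.keys (frag_of (act_word (fst k) (gen (snd k)))) \<subseteq> bwords n x"
    using act_word_gen_bwords by simp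
qed

lemma NN_Ew:
  assumes "k \<in> Kset n x" shows "NN x (Ew k) = frag_of k"
proof -
  obtain U vs where k: "k = (U, vs)" by fastforce
  show ?thesis
  proof (cases "vs = []")
    case True then show ?thesis using assms k by (simp add: Ew_def Nw_def Kset_def act_word_def NN_def)
  next
    case False
    then have "gen vs \<noteq> []" by simp
    then have "Nw x (act_word U (gen vs)) = Nz (Uy U (frag_of (1, vs)))"
      using False by (simp add: Nw_def act_word_def Tw_act_word[symmetric] Tw_gen[symmetric] del: Tw.simps)
    then show ?thesis using assms k
      by (simp add: Ew_def Kset_def Uy_def Nz_def NN_def)
  qed
qed

lemma NN_EE:
  assumes "Poly_Mapping.keys Q \<subseteq> Kset n x" shows "NN x (EE Q) = Q"
proof -
  have "NN x (EE Q) = frag_extend (\<lambda>k. NN x (Ew k)) Q"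
    by (simp add: NN_def EE_def frag_extend_extend)
  also have "\<dots> = frag_extend frag_of Q"
  proof (intro frag_extend_eq)
    fix k assume "k \<in> Poly_Mapping.keys Q"
    then have "k \<in> Kset n x" using assms by blast
    then show "NN x (Ew k) = frag_of k" by (rule NN_Ew)
  qed
  finally show ?thesis by (simp add: frag_expansion[symmetric])
qed

lemma NN_add: "NN x (r + s) = NN x r + NN x s"
  by (simp add: NN_def frag_extend_add)
lemma NN_diff: "NN x (r - s) = NN x r - NN x s"
  by (simp add: NN_def frag_extend_diff)
lemma NN_0 [simp]: "NN x 0 = 0"
  by (simp add: NN_def)
lemma NN_of [simp]: "NN x (frag_of w) = Nw x w"
  by (simp add: NN_def)

lemma map_fst_update_same: "i < length w \<Longrightarrow> map fst (w[i := (fst (w!i), c)]) = map fst w"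
proof -
  assume i: "i < length w"
  have "map fst (w[i := (fst (w!i), c)]) = (map fst w)[i := (map fst w)!i]"
    using i by (simp add: map_update)
  then show ?thesis by simp
qed

lemma prod_list_update_mult:
  "i < length xs \<Longrightarrow> prod_list (xs[i := u * xs!i]) = u * (prod_list (xs::'m::comm_monoid_mult list))"
  by (induction xs arbitrary: i) (auto simp: mult_ac split: nat.splits)

lemma letters_update:
  assumes "\<forall>(z, a) \<in> set w. a \<in> carrier (ZM z)" "c \<in> carrier (ZM z')"
  shows "\<forall>(z, a) \<in> set (w[i := (z', c)]). a \<in> carrier (ZM z)"
  using assms set_update_subset_insert[of w i "(z', c)"] by auto

lemma update1_bwords:
  assumes "w \<in> bwords n x" "i < n" "c \<in> carrier (ZM (fst (w!i)))"
  shows "w[i := (fst (w!i), c)] \<in> bwords n x"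
  using assms letters_update[of w c "fst (w!i)" i] map_fst_update_same[of i w]
  by (auto simp: bwords_def)

lemma update2_bwords:
  assumes "length w = n" "\<forall>(z, a) \<in> set w. a \<in> carrier (ZM z)" "i < n" "u * prod_list (map fst w) = x"
  shows "w[i := (u * fst (w!i), ZM_act u (snd (w!i)))] \<in> bwords n x"
proof -
  have wi: "w!i \<in> set w" using assms by auto
  then have "snd (w!i) \<in> carrier (ZM (fst (w!i)))" using assms(2) by auto
  then have c: "ZM_act u (snd (w!i)) \<in> carrier (ZM (u * fst (w!i)))" by (rule ZM_act_carrier)
  have "map fst (w[i := (u * fst (w!i), ZM_act u (snd (w!i)))]) = (map fst w)[i := u * (map fst w)!i]"
    using assms by (simp add: map_update)
  then have "prod_list (map fst (w[i := (u * fst (w!i), ZM_act u (snd (w!i)))])) = x"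
    using assms prod_list_update_mult[of i "map fst w" u] by simp
  then show ?thesis using assms letters_update[OF assms(2) c] by (auto simp: bwords_def)
qed

lemma keys_diff_sub: "Poly_Mapping.keys a \<subseteq> S \<Longrightarrow> Poly_Mapping.keys b \<subseteq> S \<Longrightarrow> Poly_Mapping.keys (a - b) \<subseteq> S"
  using keys_diff[of a b] by blast

lemma brels_carrier: "brels n x \<subseteq> carrier (bfree n x)"
proof
  fix h assume h: "h \<in> brels n x"
  let ?S = "bwords n x"
  have fo: "Poly_Mapping.keys (frag_of w) \<subseteq> ?S" if "w \<in> ?S" for w using that by simp
  have "Poly_Mapping.keys h \<subseteq> ?S"
    using h
  proof (simp only: brels_def Un_iff, elim disjE exE conjE CollectE)
    fix w i a b
    assume eq: "h = frag_of (w[i := (fst (w!i), a + b)]) - frag_of (w[i := (fst (w!i), a)]) - frag_of (w[i := (fst (w!i), b)])"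
      and w: "w \<in> bwords n x" "i < n" "a \<in> carrier (ZM (fst (w!i)))" "b \<in> carrier (ZM (fst (w!i)))"
    have "a + b \<in> carrier (ZM (fst (w!i)))" using w ZM_add_carrier by blast
    then have "w[i := (fst (w!i), a + b)] \<in> ?S" "w[i := (fst (w!i), a)] \<in> ?S" "w[i := (fst (w!i), b)] \<in> ?S"
      using w update1_bwords[of w n x i] by auto
    then show ?thesis unfolding eq by (intro keys_diff_sub fo)
  next
    fix w i u
    assume eq: "h = frag_of (w[i := (u * fst (w!i), ZM_act u (snd (w!i)))]) - frag_of (w[Suc i := (u * fst (w!Suc i), ZM_act u (snd (w!Suc i)))])"
      and w: "length w = n" "\<forall>(z, a) \<in> set w. a \<in> carrier (ZM z)" "Suc i < n" "u * prod_list (map fst w) = x"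
    have "w[i := (u * fst (w!i), ZM_act u (snd (w!i)))] \<in> ?S"
         "w[Suc i := (u * fst (w!Suc i), ZM_act u (snd (w!Suc i)))] \<in> ?S"
      using w by (auto intro!: update2_bwords)
    then show ?thesis unfolding eq by (intro keys_diff_sub fo)
  next
    fix w assume "h = frag_of w" "w \<in> bwords n x"
    then show ?thesis by simp
  qed
  then show "h \<in> carrier (bfree n x)" by (simp add: bfree_def)
qed

lemma bfree_group: "group (bfree n x)" by (simp add: bfree_def)
lemma bfree_comm_group: "comm_group (bfree n x)" by (simp add: bfree_def abelian_free_Abelian_group)

lemma bsub_subgroup: "subgroup (bsub n x) (bfree n x)"
  unfolding bsub_def by (rule group.generate_is_subgroup[OF bfree_group brels_carrier])

lemma bsub_carrier: "h \<in> bsub n x \<Longrightarrow> h \<in> carrier (bfree n x)"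
  using subgroup.subset[OF bsub_subgroup] by blast

lemma bsub_0 [simp]: "0 \<in> bsub n x"
  using subgroup.one_closed[OF bsub_subgroup, of n x] by (simp add: bfree_def)

lemma bsub_add: "a \<in> bsub n x \<Longrightarrow> b \<in> bsub n x \<Longrightarrow> a + b \<in> bsub n x"
  using subgroup.m_closed[OF bsub_subgroup, of a n x b] by (simp add: bfree_def)

lemma bsub_neg: "a \<in> bsub n x \<Longrightarrow> - a \<in> bsub n x"
  using subgroup.m_inv_closed[OF bsub_subgroup, of a n x] bsub_carrier[of a n x]
  by (simp add: bfree_def)

lemma bsub_diff: "a \<in> bsub n x \<Longrightarrow> b \<in> bsub n x \<Longrightarrow> a - b \<in> bsub n x"
  using bsub_add[OF _ bsub_neg] by (metis diff_conv_add_uminus)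

lemma bsub_cmul: "a \<in> bsub n x \<Longrightarrow> frag_cmul k a \<in> bsub n x"
  by (rule frag_closure_minus_cmul[where P="\<lambda>a. a \<in> bsub n x"]) (auto intro: bsub_diff)

lemma bsub_sum: "(\<And>i. i \<in> I \<Longrightarrow> f i \<in> bsub n x) \<Longrightarrow> sum f I \<in> bsub n x"
  by (induction I rule: infinite_finite_induct) (auto intro: bsub_add)

lemma bsub_extend: "(\<And>p. p \<in> Poly_Mapping.keys c \<Longrightarrow> F p \<in> bsub n x) \<Longrightarrow> frag_extend F c \<in> bsub n x"
  unfolding frag_extend_def by (intro bsub_sum bsub_cmul) auto

lemma brels_bsub: "h \<in> brels n x \<Longrightarrow> h \<in> bsub n x"
  unfolding bsub_def by (rule generate.incl)

lemma map_snd_update: "map snd (w[i := (z, c)]) = (map snd w)[i := c]"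
  by (simp add: map_update)

lemma Nw_nonempty: "w \<noteq> [] \<Longrightarrow> Nw x w = Nz (Tw (map snd w))"
  by (simp add: Nw_def)

lemma Tw_update_act_w:
  "i < length w \<Longrightarrow> Tw ((map snd w)[i := ZM_act u (snd (w!i))]) = Uy u (Tw (map snd w))"
  using Tw_update_act[of i "map snd w" u] by simp

lemma NN_brels: "h \<in> brels n x \<Longrightarrow> NN x h = 0"
proof (simp only: brels_def Un_iff, elim disjE exE conjE CollectE)
  fix w i a b
  assume eq: "h = frag_of (w[i := (fst (w!i), a + b)]) - frag_of (w[i := (fst (w!i), a)]) - frag_of (w[i := (fst (w!i), b)])"
    and w: "w \<in> bwords n x" "i < n" "a \<in> carrier (ZM (fst (w!i)))" "b \<in> carrier (ZM (fst (w!i)))"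
  have len: "length w = n" using w by (simp add: bwords_def)
  then have ne: "w[i := c] \<noteq> []" for c using w by auto
  show "NN x h = 0" unfolding eq NN_diff NN_of
    using ne len w(2)
    by (simp add: Nw_nonempty map_snd_update Tw_update_add Nz_add)
next
  fix w i u
  assume eq: "h = frag_of (w[i := (u * fst (w!i), ZM_act u (snd (w!i)))]) - frag_of (w[Suc i := (u * fst (w!Suc i), ZM_act u (snd (w!Suc i)))])"
    and w: "length w = n" "\<forall>(z, a) \<in> set w. a \<in> carrier (ZM z)" "Suc i < n" "u * prod_list (map fst w) = x"
  have ne: "w[j := c] \<noteq> []" for j c using w by auto
  have "snd (w!i) = (map snd w)!i" "snd (w!Suc i) = (map snd w)!Suc i" using w by auto
  then show "NN x h = 0" unfolding eq NN_diff NN_of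
    using ne w(1,3)
    by (simp add: Nw_nonempty map_snd_update Tw_update_act_w del: Tw.simps)
next
  fix w i assume eq: "h = frag_of w" and w: "w \<in> bwords n x" and i: "i < n" "snd (w!i) = frag_of (fst (w!i), 1)"
  have len: "length w = n" using w by (simp add: bwords_def)
  have "(map snd w)!i = frag_of (fst (w!i), 1)" using i len by simp
  moreover have "w \<noteq> []" using i len by auto
  ultimately have "Nw x w = 0" using i len
    by (simp add: Nw_nonempty Nz_Tw_deg[of i "map snd w" "fst (w!i)"] del: Tw.simps)
  then show "NN x h = 0" using eq by simp
qed

lemma NN_bsub: "h \<in> bsub n x \<Longrightarrow> NN x h = 0"
  unfolding bsub_def
proof (induction rule: generate.induct)
  case one then show ?case by (simp add: bfree_def)
next
  case (incl h) then show ?case by (rule NN_brels)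
next
  case (inv h)
  then have "h \<in> carrier (bfree n x)" using brels_carrier by blast
  then show ?case using inv NN_brels[of h n x] by (simp add: bfree_def NN_def frag_extend_minus)
next
  case (eng h1 h2) then show ?case by (simp add: bfree_def NN_add)
qed

definition consC :: "('m \<times> (('m \<times> 'm) \<Rightarrow>\<^sub>0 int)) \<Rightarrow> ('m bword \<Rightarrow>\<^sub>0 int) \<Rightarrow> ('m bword \<Rightarrow>\<^sub>0 int)" where
  "consC c r = frag_extend (\<lambda>w. frag_of (c # w)) r"

lemma consC_of [simp]: "consC c (frag_of w) = frag_of (c # w)" by (simp add: consC_def)
lemma consC_diff: "consC c (a - b) = consC c a - consC c b" by (simp add: consC_def frag_extend_diff)
lemma consC_add: "consC c (a + b) = consC c a + consC c b" by (simp add: consC_def frag_extend_add)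
lemma consC_0 [simp]: "consC c 0 = 0" by (simp add: consC_def)
lemma consC_neg: "consC c (- a) = - consC c a" by (simp add: consC_def frag_extend_minus)

lemma consC_brels:
  assumes c: "snd c \<in> carrier (ZM (fst c))" and h: "h \<in> brels k y"
  shows "consC c h \<in> brels (Suc k) (fst c * y)"
  using h[unfolded brels_def]
proof (elim UnE exE conjE CollectE)
  fix w i a b
  assume eq: "h = frag_of (w[i := (fst (w!i), a + b)]) - frag_of (w[i := (fst (w!i), a)]) - frag_of (w[i := (fst (w!i), b)])"
    and w: "w \<in> bwords k y" "i < k" "a \<in> carrier (ZM (fst (w!i)))" "b \<in> carrier (ZM (fst (w!i)))"
  have w': "c # w \<in> bwords (Suc k) (fst c * y)" using w c by (auto simp: bwords_def)
  have eqc: "consC c h = frag_of ((c#w)[Suc i := (fst ((c#w)!Suc i), a + b)]) - frag_of ((c#w)[Suc i := (fst ((c#w)!Suc i), a)])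
          - frag_of ((c#w)[Suc i := (fst ((c#w)!Suc i), b)])"
    unfolding eq by (simp add: consC_diff)
  show ?thesis unfolding brels_def
    apply (intro UnI1 CollectI)
    apply (rule exI[of _ "c#w"], rule exI[of _ "Suc i"], rule exI[of _ a], rule exI[of _ b])
    using eqc w w' by simp
next
  fix w i u
  assume eq: "h = frag_of (w[i := (u * fst (w!i), ZM_act u (snd (w!i)))]) - frag_of (w[Suc i := (u * fst (w!Suc i), ZM_act u (snd (w!Suc i)))])"
    and w: "length w = k" "\<forall>(z, a) \<in> set w. a \<in> carrier (ZM z)" "Suc i < k" "u * prod_list (map fst w) = y"
  have w': "length (c#w) = Suc k" "\<forall>(z, a) \<in> set (c#w). a \<in> carrier (ZM z)" "Suc (Suc i) < Suc k"
    "u * prod_list (map fst (c#w)) = fst c * y"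
    using w c by (auto simp: mult_ac)
  have eqc: "consC c h = frag_of ((c#w)[Suc i := (u * fst ((c#w)!Suc i), ZM_act u (snd ((c#w)!Suc i)))])
       - frag_of ((c#w)[Suc (Suc i) := (u * fst ((c#w)!Suc (Suc i)), ZM_act u (snd ((c#w)!Suc (Suc i))))])"
    unfolding eq by (simp add: consC_diff)
  show ?thesis unfolding brels_def
    apply (rule UnI1, rule UnI2, rule CollectI)
    apply (rule exI[of _ "c#w"], rule exI[of _ "Suc i"], rule exI[of _ u])
    using eqc w' by simp
next
  fix w i assume eq: "h = frag_of w" and w: "w \<in> bwords k y" and i: "i < k" "snd (w!i) = frag_of (fst (w!i), 1)"
  have w': "c # w \<in> bwords (Suc k) (fst c * y)" using w c i by (auto simp: bwords_def)
  have ex: "\<exists>j<Suc k. snd ((c#w)!j) = frag_of (fst ((c#w)!j), 1)" using i by (intro exI[of _ "Suc i"]) auto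
  show ?thesis unfolding brels_def
    apply (intro UnI2 CollectI)
    apply (rule exI[of _ "c#w"])
    using w' eq ex by simp
qed

lemma consC_bsub:
  assumes c: "snd c \<in> carrier (ZM (fst c))" and h: "h \<in> bsub k y"
  shows "consC c h \<in> bsub (Suc k) (fst c * y)"
  using h unfolding bsub_def
proof (induction rule: generate.induct)
  case one then show ?case using bsub_0 by (simp add: bfree_def bsub_def)
next
  case (incl h) show ?case by (rule generate.incl[OF consC_brels[OF c incl]])
next
  case (inv h)
  then have "h \<in> carrier (bfree k y)" using brels_carrier by blast
  then have "inv\<^bsub>bfree k y\<^esub> h = - h" by (simp add: bfree_def)
  have "consC c h \<in> bsub (Suc k) (fst c * y)" using consC_brels[OF c inv] by (rule brels_bsub)
  then have "- consC c h \<in> bsub (Suc k) (fst c * y)" by (rule bsub_neg)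
  then show ?case using \<open>inv\<^bsub>bfree k y\<^esub> h = - h\<close> by (simp add: bsub_def consC_neg)
next
  case (eng h1 h2) then show ?case using bsub_add by (simp add: bfree_def bsub_def consC_add)
qed

section \<open>Expansion into normal forms\<close>

lemma rel1_0:
  assumes "a \<in> carrier (ZM Z)" "b \<in> carrier (ZM Z)" "(Z, a) # rest \<in> bwords n x"
  shows "frag_of ((Z, a + b) # rest) - frag_of ((Z, a) # rest) - frag_of ((Z, b) # rest) \<in> bsub n x"
proof -
  have n: "0 < n" using assms(3) by (auto simp: bwords_def)
  show ?thesis
    apply (rule brels_bsub)
    unfolding brels_def
    apply (rule UnI1, rule UnI1, rule CollectI)
    apply (rule exI[of _ "(Z, a) # rest"], rule exI[of _ 0], rule exI[of _ a], rule exI[of _ b])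
    using assms n by simp
qed

lemma lin0:
  assumes W: "\<And>c. c \<in> carrier (ZM Z) \<Longrightarrow> (Z, c) # rest \<in> bwords n x"
    and b: "b \<in> carrier (ZM Z)"
  shows "frag_of ((Z, b) # rest) - frag_extend (\<lambda>p. frag_of ((Z, frag_of p) # rest)) b \<in> bsub n x"
proof -
  let ?S = "{(u, v). u * v = Z}"
  have cZ: "c \<in> carrier (ZM Z) \<longleftrightarrow> Poly_Mapping.keys c \<subseteq> ?S" for c by (simp add: carrier_ZM)
  have kb: "Poly_Mapping.keys b \<subseteq> ?S" using b cZ by blast
  let ?P = "\<lambda>b. frag_of ((Z, b) # rest) - frag_extend (\<lambda>p. frag_of ((Z, frag_of p) # rest)) b \<in> bsub n x"
  show ?thesis
  proof (rule free_Abelian_group_induct[where P="?P", OF kb])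
    have z: "(0::('a \<times> 'a) \<Rightarrow>\<^sub>0 int) \<in> carrier (ZM Z)" by (simp add: cZ)
    have "frag_of ((Z, 0 + 0) # rest) - frag_of ((Z, 0) # rest) - frag_of ((Z, 0) # rest) \<in> bsub n x"
      by (rule rel1_0[OF z z W[OF z]])
    then have "- frag_of ((Z, 0) # rest) \<in> bsub n x" by simp
    then have "frag_of ((Z, 0) # rest) \<in> bsub n x" using bsub_neg by fastforce
    then show "?P 0" by simp
  next
    fix x1 y1 assume k1: "Poly_Mapping.keys x1 \<subseteq> ?S" and k2: "Poly_Mapping.keys y1 \<subseteq> ?S"
      and P1: "?P x1" and P2: "?P y1"
    have cx: "x1 \<in> carrier (ZM Z)" "y1 \<in> carrier (ZM Z)" using k1 k2 cZ by auto
    have cxy: "x1 - y1 \<in> carrier (ZM Z)" using k1 k2 keys_diff[of x1 y1] cZ by blast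
    have r: "frag_of ((Z, (x1 - y1) + y1) # rest) - frag_of ((Z, x1 - y1) # rest) - frag_of ((Z, y1) # rest) \<in> bsub n x"
      by (rule rel1_0[OF cxy cx(2) W[OF cxy]])
    let ?F = "frag_extend (\<lambda>p. frag_of ((Z, frag_of p) # rest))"
    have "frag_of ((Z, x1 - y1) # rest) - ?F (x1 - y1)
        = (frag_of ((Z, x1) # rest) - ?F x1) - (frag_of ((Z, y1) # rest) - ?F y1)
          - (frag_of ((Z, (x1 - y1) + y1) # rest) - frag_of ((Z, x1 - y1) # rest) - frag_of ((Z, y1) # rest))"
      by (simp add: frag_extend_diff)
    also have "\<dots> \<in> bsub n x" by (rule bsub_diff[OF bsub_diff[OF P1 P2] r])
    finally show "?P (x1 - y1)" .
  next
    fix p show "?P (frag_of p)" by simp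
  qed
qed

lemma step_move:
  assumes a: "a \<in> carrier (ZM z)" and k: "(U, vs) \<in> Kset n' p'" and ne: "vs \<noteq> []"
  shows "frag_of ((U * z, ZM_act U a) # gen vs) - frag_of ((z, a) # act_word U (gen vs)) \<in> bsub (Suc n') (z * p')"
proof -
  obtain v vs' where vs: "vs = v # vs'" using ne by (cases vs) auto
  have kk: "length vs = n'" "U * prod_list vs = p'" using k by (auto simp: Kset_def)
  let ?w = "(z, a) # gen vs"
  have w: "length ?w = Suc n'" "\<forall>(z, a) \<in> set ?w. a \<in> carrier (ZM z)" "Suc 0 < Suc n'"
     "U * prod_list (map fst ?w) = z * p'"
    using kk a gen_carrier[of vs] vs by (auto simp: mult_ac)
  have e1: "?w[0 := (U * fst (?w!0), ZM_act U (snd (?w!0)))] = (U * z, ZM_act U a) # gen vs" by simp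
  have e2: "?w[Suc 0 := (U * fst (?w!Suc 0), ZM_act U (snd (?w!Suc 0)))] = (z, a) # act_word U (gen vs)"
    using vs by (simp add: gen_Cons act_word_def)
  have "frag_of (?w[0 := (U * fst (?w!0), ZM_act U (snd (?w!0)))]) - frag_of (?w[Suc 0 := (U * fst (?w!Suc 0), ZM_act U (snd (?w!Suc 0)))])
          \<in> bsub (Suc n') (z * p')"
    apply (rule brels_bsub)
    unfolding brels_def
    apply (rule UnI1, rule UnI2, rule CollectI)
    apply (rule exI[of _ ?w], rule exI[of _ 0], rule exI[of _ U])
    using w by simp
  then show ?thesis using e1 e2 by simp
qed

lemma step_letter:
  assumes k: "(U, vs) \<in> Kset n' p'" and p: "fst p * snd p = z"
  shows "frag_of ((U * z, frag_of (U * fst p, snd p)) # gen vs)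
          - (if snd p = 1 then 0 else Ew (fst p * U, snd p # vs)) \<in> bsub (Suc n') (z * p')"
proof (cases "snd p = 1")
  case True
  have kk: "length vs = n'" "U * prod_list vs = p'" using k by (auto simp: Kset_def)
  have z: "z = fst p" using p True by simp
  let ?w = "(U * z, frag_of (U * fst p, 1)) # gen vs"
  have wb: "?w \<in> bwords (Suc n') (z * p')"
    using kk gen_carrier[of vs] z by (auto simp: bwords_def carrier_ZM mult_ac)
  have "frag_of ?w \<in> bsub (Suc n') (z * p')"
    apply (rule brels_bsub)
    unfolding brels_def
    apply (rule UnI2, rule CollectI)
    apply (rule exI[of _ ?w])
    using wb z by auto
  then show ?thesis using True by simp
next
  case False
  have "act_word (fst p * U) (gen (snd p # vs)) = (U * z, frag_of (U * fst p, snd p)) # gen vs"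
    using p by (simp add: act_word_gen_Cons mult_ac)
  then show ?thesis using False by (simp add: Ew_def)
qed

definition Gk :: "('m::comm_monoid_mult \<times> 'm) \<Rightarrow> ('m \<times> 'm list) \<Rightarrow> ('m bword \<Rightarrow>\<^sub>0 int)" where
  "Gk p k = (if snd p = 1 then 0 else Ew (fst p * fst k, snd p # snd k))"

lemma step_key:
  assumes a: "a \<in> carrier (ZM z)" and k: "(U, vs) \<in> Kset n' p'" and n0: "n' = 0 \<Longrightarrow> p' = 1"
  shows "frag_of ((z, a) # act_word U (gen vs)) - frag_extend (\<lambda>p. Gk p (U, vs)) a \<in> bsub (Suc n') (z * p')"
proof -
  have kk: "length vs = n'" "1 \<notin> set vs" "U * prod_list vs = p'" using k by (auto simp: Kset_def)
  let ?T0 = "frag_of ((z, a) # act_word U (gen vs))"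
  let ?T1 = "frag_of ((U * z, ZM_act U a) # gen vs)"
  let ?F = "frag_extend (\<lambda>p. frag_of ((U * z, frag_of (U * fst p, snd p)) # gen vs)) a"
  have s1: "?T0 - ?T1 \<in> bsub (Suc n') (z * p')"
  proof (cases "vs = []")
    case True
    then have "U = 1" using kk n0 by simp
    then show ?thesis using True by (simp add: act_word_def ZM_act_one)
  next
    case False
    then have "?T1 - ?T0 \<in> bsub (Suc n') (z * p')" by (rule step_move[OF a k])
    then show ?thesis using bsub_neg by fastforce
  qed
  have W: "(U * z, c) # gen vs \<in> bwords (Suc n') (z * p')" if "c \<in> carrier (ZM (U * z))" for c
    using that kk gen_carrier[of vs] by (auto simp: bwords_def mult_ac)
  have s2': "?T1 - frag_extend (\<lambda>q. frag_of ((U * z, frag_of q) # gen vs)) (ZM_act U a) \<in> bsub (Suc n') (z * p')"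
    by (rule lin0[OF W ZM_act_carrier[OF a]])
  have "frag_extend (\<lambda>q. frag_of ((U * z, frag_of q) # gen vs)) (ZM_act U a) = ?F"
    by (simp add: ZM_act_alt frag_extend_extend)
  with s2' have s2: "?T1 - ?F \<in> bsub (Suc n') (z * p')" by simp
  have s3: "?F - frag_extend (\<lambda>p. Gk p (U, vs)) a \<in> bsub (Suc n') (z * p')"
    unfolding frag_extend_diff_fun[symmetric]
  proof (rule bsub_extend)
    fix p assume "p \<in> Poly_Mapping.keys a"
    then have pz: "fst p * snd p = z" using a by (auto simp: carrier_ZM)
    have "frag_of ((U * z, frag_of (U * fst p, snd p)) # gen vs)
          - (if snd p = 1 then 0 else Ew (fst p * U, snd p # vs)) \<in> bsub (Suc n') (z * p')"
      by (rule step_letter[OF k pz])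
    then show "frag_of ((U * z, frag_of (U * fst p, snd p)) # gen vs) - Gk p (U, vs) \<in> bsub (Suc n') (z * p')"
      by (simp only: Gk_def fst_conv snd_conv)
  qed
  have "?T0 - frag_extend (\<lambda>p. Gk p (U, vs)) a = (?T0 - ?T1) + (?T1 - ?F) + (?F - frag_extend (\<lambda>p. Gk p (U, vs)) a)"
    by simp
  also have "\<dots> \<in> bsub (Suc n') (z * p')" using s1 s2 s3 by (intro bsub_add)
  finally show ?thesis .
qed

lemma EE_Nz_pL:
  assumes "\<And>k. k \<in> Poly_Mapping.keys Y \<Longrightarrow> 1 \<notin> set (snd k)"
  shows "EE (Nz (pL a Y)) = frag_extend (\<lambda>p. frag_extend (\<lambda>k. Gk p k) Y) a"
proof -
  have "EE (Nz (pL a Y)) = frag_extend (\<lambda>p. frag_extend (\<lambda>k. EE (Nz (frag_of (fst p * fst k, snd p # snd k)))) Y) a"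
    by (simp add: EE_def Nz_def pL_def frag_extend_extend)
  also have "\<dots> = frag_extend (\<lambda>p. frag_extend (\<lambda>k. Gk p k) Y) a"
  proof (intro frag_extend_eq)
    fix p k assume "k \<in> Poly_Mapping.keys Y"
    then have "1 \<notin> set (snd k)" by (rule assms)
    then show "EE (Nz (frag_of (fst p * fst k, snd p # snd k))) = Gk p k"
      by (simp add: EE_def Nz_def Gk_def)
  qed
  finally show ?thesis .
qed

lemma Nw_Cons: "Nw x (c # w) = Nz (pL (snd c) (Nw (prod_list (map fst w)) w))"
proof (cases "w = []")
  case True then show ?thesis by (simp add: Nw_def Nz_def)
next
  case False then show ?thesis by (simp add: Nw_def Nz_pL[of _ "Tw (map snd w)"])
qed

theorem expansion_word:
  "w \<in> bwords n x \<Longrightarrow> frag_of w - EE (Nw x w) \<in> bsub n x"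
proof (induction w arbitrary: n x)
  case Nil
  then show ?case by (simp add: Nw_def EE_def Ew_def act_word_def)
next
  case (Cons c w')
  obtain z a where c: "c = (z, a)" by fastforce
  obtain n' where n: "n = Suc n'" using Cons.prems by (cases n) (auto simp: bwords_def)
  define p' where "p' = prod_list (map fst w')"
  have a: "a \<in> carrier (ZM z)" and w': "w' \<in> bwords n' p'" and x: "x = z * p'"
    using Cons.prems c n by (auto simp: bwords_Cons p'_def)
  have n0: "n' = 0 \<Longrightarrow> p' = 1" using w' by (auto simp: bwords_def p'_def)
  define Y where "Y = Nw p' w'"
  have kY: "Poly_Mapping.keys Y \<subseteq> Kset n' p'" unfolding Y_def by (rule keys_Nw[OF w'])
  have IH: "frag_of w' - EE Y \<in> bsub n' p'" unfolding Y_def by (rule Cons.IH[OF w'])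
  have s1: "frag_of (c # w') - consC c (EE Y) \<in> bsub n x"
    using consC_bsub[of c, OF _ IH] a c n x by (simp add: consC_diff)
  have "consC c (EE Y) = frag_extend (\<lambda>k. frag_of (c # act_word (fst k) (gen (snd k)))) Y"
    by (simp add: consC_def EE_def Ew_def frag_extend_extend)
  moreover have "frag_extend (\<lambda>k. frag_of (c # act_word (fst k) (gen (snd k))) - frag_extend (\<lambda>p. Gk p k) a) Y \<in> bsub n x"
  proof (rule bsub_extend)
    fix k assume "k \<in> Poly_Mapping.keys Y"
    then have "k \<in> Kset n' p'" using kY by blast
    then have "(fst k, snd k) \<in> Kset n' p'" by simp
    from step_key[OF a this n0]
    show "frag_of (c # act_word (fst k) (gen (snd k))) - frag_extend (\<lambda>p. Gk p k) a \<in> bsub n x"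
      using c n x by simp
  qed
  ultimately have s2: "consC c (EE Y) - frag_extend (\<lambda>k. frag_extend (\<lambda>p. Gk p k) a) Y \<in> bsub n x"
    by (simp add: frag_extend_diff_fun)
  have "EE (Nw x (c # w')) = EE (Nz (pL a Y))"
    using c by (simp add: Nw_Cons Y_def p'_def)
  also have "\<dots> = frag_extend (\<lambda>p. frag_extend (\<lambda>k. Gk p k) Y) a"
    using kY by (intro EE_Nz_pL) (auto simp: Kset_def)
  also have "\<dots> = frag_extend (\<lambda>k. frag_extend (\<lambda>p. Gk p k) a) Y"
    by (rule frag_extend_swap)
  finally have e: "EE (Nw x (c # w')) = frag_extend (\<lambda>k. frag_extend (\<lambda>p. Gk p k) a) Y" .
  have "frag_of (c # w') - EE (Nw x (c # w')) = (frag_of (c # w') - consC c (EE Y)) + (consC c (EE Y) - frag_extend (\<lambda>k. frag_extend (\<lambda>p. Gk p k) a) Y)"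
    using e by simp
  also have "\<dots> \<in> bsub n x" using s1 s2 by (rule bsub_add)
  finally show ?case .
qed

theorem expansion:
  assumes r: "r \<in> carrier (bfree n x)" shows "r - EE (NN x r) \<in> bsub n x"
proof -
  have "r - EE (NN x r) = frag_extend (\<lambda>w. frag_of w - EE (Nw x w)) r"
    by (simp add: frag_extend_diff_fun EE_def NN_def frag_extend_extend frag_expansion[symmetric])
  also have "\<dots> \<in> bsub n x"
  proof (rule bsub_extend)
    fix w assume "w \<in> Poly_Mapping.keys r"
    then have "w \<in> bwords n x" using r by (auto simp: bfree_def)
    then show "frag_of w - EE (Nw x w) \<in> bsub n x" by (rule expansion_word)
  qed
  finally show ?thesis .
qed

lemma bsub_iff_NN:
  assumes r: "r \<in> carrier (bfree n x)" shows "r \<in> bsub n x \<longleftrightarrow> NN x r = 0"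
  using NN_bsub expansion[OF r] by (auto simp: EE_def)

lemma bsub_normal: "bsub n x \<lhd> bfree n x"
  using comm_group.subgroup_imp_normal[OF bfree_comm_group bsub_subgroup] .

lemma BZM_group: "group (BZM n x)"
  unfolding BZM_def by (rule normal.factorgroup_is_group[OF bsub_normal])

lemma carrier_BZM: "carrier (BZM n x) = bclass n x ` carrier (bfree n x)"
  by (simp add: BZM_def carrier_FactGroup bclass_def image_def)

lemma bclass_carrier: "r \<in> carrier (bfree n x) \<Longrightarrow> bclass n x r \<in> carrier (BZM n x)"
  by (simp add: carrier_BZM)

lemma mult_BZM:
  assumes "r \<in> carrier (bfree n x)" "s \<in> carrier (bfree n x)"
  shows "bclass n x r \<otimes>\<^bsub>BZM n x\<^esub> bclass n x s = bclass n x (r + s)"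
  using normal.rcos_sum[OF bsub_normal assms] by (simp add: BZM_def bclass_def bfree_def)

lemma one_BZM: "\<one>\<^bsub>BZM n x\<^esub> = bclass n x 0"
proof -
  have sg: "subgroup (bsub n x) (bfree n x)" by (rule bsub_subgroup)
  have o: "\<one>\<^bsub>bfree n x\<^esub> \<in> bsub n x" by (rule subgroup.one_closed[OF sg])
  have "bsub n x #>\<^bsub>bfree n x\<^esub> \<one>\<^bsub>bfree n x\<^esub> = bsub n x"
    by (rule group.coset_join2[OF bfree_group subgroup.mem_carrier[OF sg o] sg o])
  then show ?thesis by (simp add: BZM_def bclass_def bfree_def)
qed

lemma bclass_mem: "r \<in> carrier (bfree n x) \<Longrightarrow> r \<in> bclass n x r"
  unfolding bclass_def
  using group.rcos_self[OF bfree_group _ bsub_subgroup] by blast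

lemma bclass_elem:
  assumes r: "r \<in> carrier (bfree n x)" and s: "s \<in> bclass n x r"
  shows "s \<in> carrier (bfree n x) \<and> NN x s = NN x r"
proof -
  have sc: "s \<in> carrier (bfree n x)"
    using s r subgroup.elemrcos_carrier[OF bsub_subgroup bfree_group] unfolding bclass_def by blast
  have "s \<otimes>\<^bsub>bfree n x\<^esub> inv\<^bsub>bfree n x\<^esub> r \<in> bsub n x"
    using subgroup.rcos_module_imp[OF bsub_subgroup bfree_group r] s unfolding bclass_def by blast
  then have "s - r \<in> bsub n x" using r by (simp add: bfree_def)
  then have "NN x (s - r) = 0" by (rule NN_bsub)
  then show ?thesis using sc by (simp add: NN_diff)
qed

lemma bclass_eq_iff:
  assumes r: "r \<in> carrier (bfree n x)" and s: "s \<in> carrier (bfree n x)"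
  shows "bclass n x r = bclass n x s \<longleftrightarrow> NN x r = NN x s"
proof
  assume "bclass n x r = bclass n x s"
  then have "r \<in> bclass n x s" using bclass_mem[OF r] by simp
  then show "NN x r = NN x s" using bclass_elem[OF s] by simp
next
  assume e: "NN x r = NN x s"
  have rs: "r - s \<in> carrier (bfree n x)" using r s keys_diff[of r s] by (auto simp: bfree_def)
  have "NN x (r - s) = 0" using e by (simp add: NN_diff)
  then have "r - s \<in> bsub n x" using bsub_iff_NN[OF rs] by simp
  then have "r \<otimes>\<^bsub>bfree n x\<^esub> inv\<^bsub>bfree n x\<^esub> s \<in> bsub n x" using s by (simp add: bfree_def)
  then have "r \<in> bsub n x #>\<^bsub>bfree n x\<^esub> s"
    using subgroup.rcos_module_rev[OF bsub_subgroup bfree_group s r] by blast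
  then have "bsub n x #>\<^bsub>bfree n x\<^esub> s = bsub n x #>\<^bsub>bfree n x\<^esub> r"
    using group.repr_independence[OF bfree_group _ s bsub_subgroup] by blast
  then show "bclass n x r = bclass n x s" by (simp add: bclass_def)
qed

lemma some_rep:
  assumes r: "r \<in> carrier (bfree n x)"
  shows "(SOME s. s \<in> bclass n x r) \<in> carrier (bfree n x) \<and> NN x (SOME s. s \<in> bclass n x r) = NN x r"
proof -
  have "(SOME s. s \<in> bclass n x r) \<in> bclass n x r" using bclass_mem[OF r] by (rule someI)
  then show ?thesis using bclass_elem[OF r] by blast
qed

definition act_ext :: "'m::comm_monoid_mult \<Rightarrow> ('m bword \<Rightarrow>\<^sub>0 int) \<Rightarrow> ('m bword \<Rightarrow>\<^sub>0 int)" where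
  "act_ext y r = frag_extend (\<lambda>w. frag_of (act_word y w)) r"

lemma act_word_bwords: "w \<in> bwords n x \<Longrightarrow> act_word y w \<in> bwords n (x * y)"
proof (cases w)
  case Nil then show "w \<in> bwords n x \<Longrightarrow> act_word y w \<in> bwords n (x * y)"
    by (simp add: bwords_def act_word_def)
next
  case (Cons c w')
  assume w: "w \<in> bwords n x"
  have c: "snd c \<in> carrier (ZM (fst c))" "\<forall>(z, a) \<in> set w'. a \<in> carrier (ZM z)"
    "length w = n" "fst c * prod_list (map fst w') = x"
    using w Cons by (auto simp: bwords_def)
  have "ZM_act y (snd c) \<in> carrier (ZM (y * fst c))" by (rule ZM_act_carrier[OF c(1)])
  then show ?thesis using c Cons by (auto simp: bwords_def act_word_def mult_ac)
qed

lemma act_ext_carrier: "r \<in> carrier (bfree n x) \<Longrightarrow> act_ext y r \<in> carrier (bfree n (x * y))"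
  unfolding act_ext_def bfree_def carrier_free_Abelian_group_iff
  by (rule keys_frag_extend_sub) (auto intro: act_word_bwords)

lemma NN_act_ext: "NN (x * y) (act_ext y r) = Uy y (NN x r)"
  by (simp add: NN_def act_ext_def Uy_def frag_extend_extend Nw_act_word[unfolded Uy_def])

lemma BZM_act_class:
  assumes r: "r \<in> carrier (bfree n x)"
  shows "BZM_act n x y (bclass n x r) = bclass n (x * y) (act_ext y r)"
proof -
  let ?s = "SOME s. s \<in> bclass n x r"
  have s: "?s \<in> carrier (bfree n x)" "NN x ?s = NN x r" using some_rep[OF r] by auto
  have "bclass n (x * y) (act_ext y ?s) = bclass n (x * y) (act_ext y r)"
    using act_ext_carrier[OF s(1)] act_ext_carrier[OF r] s(2)
    by (simp add: bclass_eq_iff NN_act_ext)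
  then show ?thesis by (simp add: BZM_act_def act_ext_def)
qed

lemma BZM_act_carrier:
  assumes "c \<in> carrier (BZM n x)" shows "BZM_act n x y c \<in> carrier (BZM n (x * y))"
proof -
  obtain r where r: "r \<in> carrier (bfree n x)" "c = bclass n x r" using assms by (auto simp: carrier_BZM)
  then show ?thesis using BZM_act_class[OF r(1)] bclass_carrier[OF act_ext_carrier[OF r(1)]] by simp
qed

definition mrg :: "nat \<Rightarrow> 'm::comm_monoid_mult list \<Rightarrow> 'm list" where
  "mrg i vs = take (i - 1) vs @ [vs!(i - 1) * vs!i] @ drop (Suc i) vs"

definition D1k :: "('m::comm_monoid_mult \<times> 'm list) \<Rightarrow> (('m \<times> 'm list) \<Rightarrow>\<^sub>0 int)" where
  "D1k k = frag_of (fst k * hd (snd k), tl (snd k))"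

definition Mk :: "nat \<Rightarrow> ('m::comm_monoid_mult \<times> 'm list) \<Rightarrow> (('m \<times> 'm list) \<Rightarrow>\<^sub>0 int)" where
  "Mk i k = frag_of (fst k, mrg i (snd k))"

definition DLk :: "('m::comm_monoid_mult \<times> 'm list) \<Rightarrow> (('m \<times> 'm list) \<Rightarrow>\<^sub>0 int)" where
  "DLk k = frag_of (fst k * last (snd k), butlast (snd k))"

definition Dk :: "('m::comm_monoid_mult \<times> 'm list) \<Rightarrow> (('m \<times> 'm list) \<Rightarrow>\<^sub>0 int)" where
  "Dk k = D1k k + (\<Sum>i\<in>{1..<length (snd k)}. frag_cmul ((-1) ^ i) (Mk i k))
          + frag_cmul ((-1) ^ length (snd k)) (DLk k)"

lemma keys_Tw_len: "Poly_Mapping.keys (Tw as) \<subseteq> {k. length (snd k) = length as}"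
proof (induction as)
  case Nil then show ?case by simp
next
  case (Cons a as)
  show ?case using keys_pL[OF subset_refl Cons.IH, of a] by auto
qed

lemma pL_cmul2: "pL a (frag_cmul c Q) = frag_cmul c (pL a Q)"
  by (simp add: pL_def frag_extend_cmul frag_extend_cmul_fun)

lemma D1k_pL:
  assumes "\<And>p. p \<in> Poly_Mapping.keys a \<Longrightarrow> fst p * snd p = z"
  shows "frag_extend D1k (pL a Q) = frag_cmul (ZM_eps a) (Uy z Q)"
proof -
  have "frag_extend D1k (pL a Q) = frag_extend (\<lambda>p. frag_extend (\<lambda>k. frag_of (fst p * fst k * snd p, snd k)) Q) a"
    by (simp add: pL_def frag_extend_extend D1k_def)
  also have "\<dots> = frag_cmul (ZM_eps a) (Uy z Q)"
  proof (rule frag_extend_const)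
    fix p assume "p \<in> Poly_Mapping.keys a"
    then have "fst p * snd p = z" by (rule assms)
    then show "frag_extend (\<lambda>k. frag_of (fst p * fst k * snd p, snd k)) Q = Uy z Q"
      by (auto simp: Uy_def mult_ac)
  qed
  finally show ?thesis .
qed

lemma Mk_pL_Suc:
  assumes "1 \<le> j" "\<And>k. k \<in> Poly_Mapping.keys Q \<Longrightarrow> j < length (snd k)"
  shows "frag_extend (Mk (Suc j)) (pL a Q) = pL a (frag_extend (Mk j) Q)"
proof -
  have "frag_extend (Mk (Suc j)) (pL a Q) = frag_extend (\<lambda>p. frag_extend (\<lambda>k. Mk (Suc j) (fst p * fst k, snd p # snd k)) Q) a"
    by (simp add: pL_def frag_extend_extend)
  also have "\<dots> = frag_extend (\<lambda>p. frag_extend (\<lambda>k. frag_of (fst p * fst k, snd p # mrg j (snd k))) Q) a"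
  proof (intro frag_extend_eq)
    fix p k assume "k \<in> Poly_Mapping.keys Q"
    then have jl: "j < length (snd k)" by (rule assms(2))
    obtain j' where j': "j = Suc j'" using assms(1) by (cases j) auto
    show "Mk (Suc j) (fst p * fst k, snd p # snd k) = frag_of (fst p * fst k, snd p # mrg j (snd k))"
      using j' jl by (simp add: Mk_def mrg_def)
  qed
  also have "\<dots> = pL a (frag_extend (Mk j) Q)"
    by (simp add: pL_def frag_extend_extend Mk_def)
  finally show ?thesis .
qed

lemma Mk_Tw:
  "1 \<le> i \<Longrightarrow> i < length as \<Longrightarrow>
    frag_extend (Mk i) (Tw as) = Tw (take (i - 1) as @ [ZM_mult (as!(i - 1)) (as!i)] @ drop (Suc i) as)"
proof (induction as arbitrary: i)
  case Nil then show ?case by simp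
next
  case (Cons a as)
  show ?case
  proof (cases "i = 1")
    case True
    then obtain b as' where as: "as = b # as'" using Cons.prems by (cases as) auto
    have "frag_extend (Mk 1) (Tw (a # b # as')) =
          frag_extend (\<lambda>p. frag_extend (\<lambda>q. frag_extend (\<lambda>k. frag_of (fst p * (fst q * fst k), snd p * snd q # snd k)) (Tw as')) b) a"
      by (simp add: pL_def frag_extend_extend Mk_def mrg_def)
    also have "\<dots> = Tw (ZM_mult a b # as')"
      by (simp add: pL_def ZM_mult_def frag_extend_extend mult.assoc)
    finally show ?thesis using True as by simp
  next
    case False
    then obtain j where j: "i = Suc j" "1 \<le> j" "j < length as" using Cons.prems by (cases i) auto
    have kl: "j < length (snd k)" if "k \<in> Poly_Mapping.keys (Tw as)" for k
      using keys_Tw_len[of as] that j by auto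
    have "frag_extend (Mk i) (Tw (a # as)) = pL a (frag_extend (Mk j) (Tw as))"
      using j kl by (simp add: Mk_pL_Suc)
    also have "\<dots> = pL a (Tw (take (j - 1) as @ [ZM_mult (as!(j - 1)) (as!j)] @ drop (Suc j) as))"
      using Cons.IH j by simp
    also have "\<dots> = Tw (take (i - 1) (a # as) @ [ZM_mult ((a # as)!(i - 1)) ((a # as)!i)] @ drop (Suc i) (a # as))"
      using j by (cases j) auto
    finally show ?thesis .
  qed
qed

lemma DLk_Tw:
  assumes "as \<noteq> []" "\<And>p. p \<in> Poly_Mapping.keys (last as) \<Longrightarrow> fst p * snd p = z"
  shows "frag_extend DLk (Tw as) = frag_cmul (ZM_eps (last as)) (Uy z (Tw (butlast as)))"
  using assms
proof (induction as)
  case Nil then show ?case by simp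
next
  case (Cons a as)
  show ?case
  proof (cases "as = []")
    case True
    have "frag_extend DLk (Tw [a]) = frag_extend (\<lambda>p. frag_of (fst p * snd p, [])) a"
      by (simp add: pL_def frag_extend_extend DLk_def)
    also have "\<dots> = frag_cmul (ZM_eps a) (Uy z (Tw []))"
      using Cons.prems True by (intro frag_extend_const) (simp add: Uy_def)
    finally show ?thesis using True by simp
  next
    case False
    have kl: "snd k \<noteq> []" if "k \<in> Poly_Mapping.keys (Tw as)" for k
      using keys_Tw_len[of as] that False by auto
    have "frag_extend DLk (Tw (a # as)) = frag_extend (\<lambda>p. frag_extend (\<lambda>k. DLk (fst p * fst k, snd p # snd k)) (Tw as)) a"
      by (simp add: pL_def frag_extend_extend)
    also have "\<dots> = frag_extend (\<lambda>p. frag_extend (\<lambda>k. frag_extend (\<lambda>k'. frag_of (fst p * fst k', snd p # snd k')) (DLk k)) (Tw as)) a"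
      using kl by (intro frag_extend_eq) (simp add: DLk_def mult.assoc)
    also have "\<dots> = pL a (frag_extend DLk (Tw as))"
      by (simp add: pL_def frag_extend_extend)
    also have "\<dots> = pL a (frag_cmul (ZM_eps (last as)) (Uy z (Tw (butlast as))))"
      using Cons False by simp
    also have "\<dots> = frag_cmul (ZM_eps (last (a # as))) (Uy z (Tw (butlast (a # as))))"
      using False by (simp add: pL_cmul2 pL_Uy2)
    finally show ?thesis .
  qed
qed

section \<open>Degenerate keys are killed\<close>

lemma Nz_of: "Nz (frag_of k) = (if 1 \<in> set (snd k) then 0 else frag_of k)"
  by (simp add: Nz_def)
lemma Nz_cmul: "Nz (frag_cmul c Q) = frag_cmul c (Nz Q)"
  by (simp add: Nz_def frag_extend_cmul)
lemma Nz_zero [simp]: "Nz 0 = 0"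
  by (simp add: Nz_def)
lemma Nz_sum: "Nz (sum f I) = (\<Sum>i\<in>I. Nz (f i))"
  by (induction I rule: infinite_finite_induct) (auto simp: Nz_add)

lemma frag_cmul_cancel: "frag_cmul c Q + frag_cmul (- c) Q = 0"
  by (simp add: frag_cmul_distrib[symmetric])

lemma mrg_nth_low: "j < i - 1 \<Longrightarrow> i < length vs \<Longrightarrow> mrg i vs ! j = vs ! j"
  by (simp add: mrg_def nth_append)

lemma mrg_nth_high:
  assumes "1 \<le> i" "i < j" "j < length vs" shows "mrg i vs ! (j - 1) = vs ! j"
proof -
  have L: "length (take (i - 1) vs) = i - 1" using assms by simp
  have m: "mrg i vs = take (i - 1) vs @ ((vs!(i - 1) * vs!i) # drop (Suc i) vs)" by (simp add: mrg_def)
  have nl: "\<not> j - 1 < i - 1" using assms by arith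
  have e: "j - 1 - (i - 1) = Suc (j - i - 1)" using assms by arith
  have "mrg i vs ! (j - 1) = ((vs!(i - 1) * vs!i) # drop (Suc i) vs) ! (j - 1 - (i - 1))"
    unfolding m nth_append L using nl by simp
  also have "\<dots> = drop (Suc i) vs ! (j - i - 1)" unfolding e by simp
  also have "\<dots> = vs ! (Suc i + (j - i - 1))" using assms by (simp add: nth_drop)
  also have "Suc i + (j - i - 1) = j" using assms by arith
  finally show ?thesis .
qed

lemma length_mrg: "1 \<le> i \<Longrightarrow> i < length vs \<Longrightarrow> length (mrg i vs) = length vs - 1"
  by (simp add: mrg_def)

lemma one_in_mrg:
  assumes "vs ! k = 1" "k < length vs" "1 \<le> i" "i < length vs" "i \<noteq> k" "i \<noteq> Suc k"
  shows "1 \<in> set (mrg i vs)"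
proof (cases "k < i - 1")
  case True
  then have "mrg i vs ! k = 1" using assms mrg_nth_low by metis
  moreover have "k < length (mrg i vs)" using True assms length_mrg[OF assms(3,4)] by simp
  ultimately show ?thesis by (metis nth_mem)
next
  case False
  then have ki: "i < k" using assms by simp
  then have "mrg i vs ! (k - 1) = 1" using assms mrg_nth_high by metis
  moreover have "k - 1 < length (mrg i vs)" using ki assms length_mrg[OF assms(3,4)] by simp
  ultimately show ?thesis by (metis nth_mem)
qed

lemma mrg_same:
  assumes "1 \<le> k" "Suc k < length vs" "vs ! k = 1"
  shows "mrg k vs = mrg (Suc k) vs"
proof -
  have t: "take k vs = take (k - 1) vs @ [vs ! (k - 1)]"
    using assms take_Suc_conv_app_nth[of "k - 1" vs] by simp
  have d: "drop k vs = vs ! k # drop (Suc k) vs" "drop (Suc k) vs = vs ! Suc k # drop (Suc (Suc k)) vs"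
    using assms(1,2) by (simp_all add: Cons_nth_drop_Suc)
  show ?thesis unfolding mrg_def using assms t d by simp
qed

lemma mrg_first:
  assumes "2 \<le> length vs" shows "mrg 1 vs = (vs!0 * vs!1) # tl (tl vs)"
  using assms by (cases vs; cases "tl vs") (auto simp: mrg_def)

lemma mrg_last:
  assumes "2 \<le> length vs" "vs ! (length vs - 1) = 1"
  shows "mrg (length vs - 1) vs = butlast vs"
proof -
  define m where "m = length vs - 1"
  have m: "1 \<le> m" "Suc m = length vs" using assms(1) by (auto simp: m_def)
  have t: "take m vs = take (m - 1) vs @ [vs ! (m - 1)]"
    using m take_Suc_conv_app_nth[of "m - 1" vs] by simp
  have dr: "drop (Suc m) vs = []" using m by simp
  have "mrg m vs = take (m - 1) vs @ [vs!(m - 1) * vs!m]" using dr by (simp add: mrg_def)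
  also have "\<dots> = take m vs" using t assms(2) by (simp add: m_def)
  also have "\<dots> = butlast vs" using m by (simp add: butlast_conv_take m_def)
  finally show ?thesis by (simp add: m_def)
qed

lemma Nz_Dk_deg:
  assumes len: "2 \<le> length vs" and one: "1 \<in> set vs"
  shows "Nz (Dk (U, vs)) = 0"
proof -
  define m where "m = length vs"
  obtain k where k: "k < m" "vs ! k = 1" using one by (auto simp: in_set_conv_nth m_def)
  define f where "f i = frag_cmul ((-1) ^ i) (Nz (Mk i (U, vs)))" for i
  have Dsplit: "Nz (Dk (U, vs)) = Nz (D1k (U, vs)) + (\<Sum>i\<in>{1..<m}. f i) + frag_cmul ((-1) ^ m) (Nz (DLk (U, vs)))"
    by (simp add: Dk_def Nz_add Nz_sum Nz_cmul f_def m_def)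
  have zero: "f i = 0" if "i \<in> {1..<m}" "i \<noteq> k" "i \<noteq> Suc k" for i
    using that one_in_mrg[OF k(2) _ _ _ that(2,3)] k(1) by (simp add: f_def Mk_def Nz_of m_def)
  have tl1: "1 \<in> set (tl vs)" if "1 \<le> k"
  proof -
    have "tl vs ! (k - 1) = vs ! Suc (k - 1)" by (rule nth_tl) (use that k in \<open>simp add: m_def\<close>)
    then have "tl vs ! (k - 1) = 1" using that k by simp
    moreover have "k - 1 < length (tl vs)" using that k by (simp add: m_def)
    ultimately show ?thesis by (metis nth_mem)
  qed
  have bl1: "1 \<in> set (butlast vs)" if "k < m - 1"
  proof -
    have "butlast vs ! k = 1" using that k by (simp add: nth_butlast m_def)
    moreover have "k < length (butlast vs)" using that by (simp add: m_def)
    ultimately show ?thesis by (metis nth_mem)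
  qed
  show ?thesis
  proof (cases "k = 0")
    case True
    have s: "(\<Sum>i\<in>{1..<m}. f i) = (\<Sum>i\<in>{1}. f i)"
      using len zero True by (intro sum.mono_neutral_right) (auto simp: m_def)
    have hd: "hd vs = 1" using k True len by (cases vs) auto
    have "mrg 1 vs = tl vs" using mrg_first[OF len] k True len by (cases vs; cases "tl vs") auto
    then have "f 1 = - Nz (D1k (U, vs))" using hd by (simp add: f_def Mk_def D1k_def)
    moreover have "Nz (DLk (U, vs)) = 0" using bl1 True len by (simp add: DLk_def Nz_of m_def)
    ultimately show ?thesis using Dsplit s by simp
  next
    case False
    then have D1: "Nz (D1k (U, vs)) = 0" using tl1 by (simp add: D1k_def Nz_of)
    show ?thesis
    proof (cases "k = m - 1")
      case True
      have z: "\<forall>i\<in>{1..<m} - {m - 1}. f i = 0"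
      proof
        fix i assume "i \<in> {1..<m} - {m - 1}"
        then have "i \<in> {1..<m}" "i \<noteq> k" "i \<noteq> Suc k" using True by auto
        then show "f i = 0" by (rule zero)
      qed
      have s: "(\<Sum>i\<in>{1..<m}. f i) = (\<Sum>i\<in>{m - 1}. f i)"
        using len False True z by (intro sum.mono_neutral_right) (auto simp: m_def)
      have ne: "vs \<noteq> []" using len by auto
      have lst: "last vs = 1" using k True by (simp add: last_conv_nth[OF ne] m_def)
      have mr: "mrg (m - 1) vs = butlast vs" using mrg_last[OF len] k True by (simp add: m_def)
      have mm: "m = Suc (m - 1)" using len by (simp add: m_def)
      have "f (m - 1) + frag_cmul ((-1) ^ m) (Nz (DLk (U, vs))) = 0"
        using lst mr by (subst mm, simp add: f_def Mk_def DLk_def frag_cmul_cancel)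
      then show ?thesis using Dsplit s D1 by simp
    next
      case False2: False
      then have km: "k < m - 1" using k by simp
      have s: "(\<Sum>i\<in>{1..<m}. f i) = (\<Sum>i\<in>{k, Suc k}. f i)"
        using len zero False km by (intro sum.mono_neutral_right) auto
      have "mrg k vs = mrg (Suc k) vs" using mrg_same[of k vs] False km k by (simp add: m_def)
      then have "f k + f (Suc k) = 0" by (simp add: f_def Mk_def frag_cmul_cancel)
      moreover have "Nz (DLk (U, vs)) = 0" using bl1 km by (simp add: DLk_def Nz_of)
      ultimately show ?thesis using Dsplit s D1 by simp
    qed
  qed
qed

lemma NN_cmul: "NN x (frag_cmul c r) = frag_cmul c (NN x r)"
  by (simp add: NN_def frag_extend_cmul)

lemma NN_sum: "NN x (sum f I) = (\<Sum>i\<in>I. NN x (f i))"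
  by (induction I rule: infinite_finite_induct) (auto simp: NN_add)

lemma bfree_add: "r \<in> carrier (bfree n x) \<Longrightarrow> s \<in> carrier (bfree n x) \<Longrightarrow> r + s \<in> carrier (bfree n x)"
  using keys_add[of r s] by (auto simp: bfree_def)
lemma bfree_cmul: "r \<in> carrier (bfree n x) \<Longrightarrow> frag_cmul c r \<in> carrier (bfree n x)"
  using keys_cmul[of c r] by (auto simp: bfree_def)
lemma bfree_sum: "(\<And>i. i \<in> I \<Longrightarrow> f i \<in> carrier (bfree n x)) \<Longrightarrow> sum f I \<in> carrier (bfree n x)"
  unfolding bfree_def by (rule sum_closed_free_Abelian_group)
lemma bfree_of: "w \<in> bwords n x \<Longrightarrow> frag_of w \<in> carrier (bfree n x)"
  by (simp add: bfree_def)
lemma bfree_diff: "r \<in> carrier (bfree n x) \<Longrightarrow> s \<in> carrier (bfree n x) \<Longrightarrow> r - s \<in> carrier (bfree n x)"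
  using keys_diff[of r s] by (auto simp: bfree_def)

lemma prod_mrg: "1 \<le> i \<Longrightarrow> i < length zs \<Longrightarrow> prod_list (mrg i zs) = prod_list (zs :: 'm::comm_monoid_mult list)"
proof -
  assume i: "1 \<le> i" "i < length zs"
  have d1: "drop (i - 1) zs = zs!(i - 1) # drop i zs" using i Cons_nth_drop_Suc[of "i - 1" zs] by simp
  have d2: "drop i zs = zs!i # drop (Suc i) zs" using i by (simp add: Cons_nth_drop_Suc)
  have "prod_list zs = prod_list (take (i - 1) zs @ drop (i - 1) zs)" by simp
  also have "\<dots> = prod_list (take (i - 1) zs) * (zs!(i - 1) * (zs!i * prod_list (drop (Suc i) zs)))"
    unfolding prod_list.append d1 d2 by simp
  also have "\<dots> = prod_list (mrg i zs)" by (simp add: mrg_def mult.assoc)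
  finally show ?thesis by simp
qed

lemma bwords_letters: "w \<in> bwords n x \<Longrightarrow> (z, a) \<in> set w \<Longrightarrow> a \<in> carrier (ZM z)"
  by (auto simp: bwords_def)

lemma bd_word1_bwords:
  assumes w: "w \<in> bwords (Suc n) x" shows "act_word (fst (hd w)) (tl w) \<in> bwords n x"
proof -
  obtain c w' where cw: "w = c # w'" using w by (cases w) (auto simp: bwords_def)
  have "w' \<in> bwords n (prod_list (map fst w'))" "x = fst c * prod_list (map fst w')"
    using w cw by (auto simp: bwords_Cons)
  then have h: "act_word (fst c) w' \<in> bwords n (prod_list (map fst w') * fst c)"
    by (intro act_word_bwords) simp
  show ?thesis using h cw \<open>x = fst c * prod_list (map fst w')\<close> by (simp add: mult.commute)
qed

lemma bd_wordL_bwords: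
  assumes w: "w \<in> bwords (Suc n) x" shows "act_word (fst (last w)) (butlast w) \<in> bwords n x"
proof -
  have ne: "w \<noteq> []" using w by (auto simp: bwords_def)
  have wsplit: "w = butlast w @ [last w]" using ne by simp
  have len: "length (butlast w) = n" using w by (auto simp: bwords_def)
  have lt: "\<forall>(z, a) \<in> set (butlast w). a \<in> carrier (ZM z)"
    using w in_set_butlastD by (fastforce simp: bwords_def)
  have "prod_list (map fst w) = x" using w by (auto simp: bwords_def)
  then have px: "prod_list (map fst (butlast w)) * fst (last w) = x"
    by (subst (asm) wsplit) simp
  show ?thesis
  proof (cases "n = 0")
    case True
    then have "butlast w = []" using len by (metis length_0_conv)
    then show ?thesis using True by (simp add: act_word_def bwords_def)
  next
    case False
    then have "butlast w \<in> bwords n (prod_list (map fst (butlast w)))" using len lt by (simp add: bwords_def)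
    from act_word_bwords[OF this, of "fst (last w)"] show ?thesis using px by simp
  qed
qed

lemma bd_wordM_bwords:
  assumes w: "w \<in> bwords (Suc n) x" and i: "1 \<le> i" "i < Suc n"
  shows "take (i - 1) w @ [(fst (w!(i - 1)) * fst (w!i), ZM_mult (snd (w!(i - 1))) (snd (w!i)))] @ drop (Suc i) w \<in> bwords n x"
    (is "?W \<in> _")
proof -
  have len: "length w = Suc n" and lt: "\<forall>(z, a) \<in> set w. a \<in> carrier (ZM z)" and px: "prod_list (map fst w) = x"
    using w by (auto simp: bwords_def)
  have m1: "snd (w!(i - 1)) \<in> carrier (ZM (fst (w!(i - 1))))" using lt i len nth_mem[of "i - 1" w] by fastforce
  have m2: "snd (w!i) \<in> carrier (ZM (fst (w!i)))" using lt i len nth_mem[of i w] by fastforce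
  have mm: "ZM_mult (snd (w!(i - 1))) (snd (w!i)) \<in> carrier (ZM (fst (w!(i - 1)) * fst (w!i)))"
    by (rule ZM_mult_carrier[OF m1 m2])
  have lt': "\<forall>(z, a) \<in> set ?W. a \<in> carrier (ZM z)"
    using lt mm by (auto dest: in_set_takeD in_set_dropD)
  have "map fst ?W = mrg i (map fst w)" using i len by (simp add: mrg_def take_map drop_map)
  then have "prod_list (map fst ?W) = x" using prod_mrg[of i "map fst w"] i len px by simp
  moreover have "length ?W = n" using i len by simp
  ultimately show ?thesis using lt' by (simp add: bwords_def)
qed

lemma bar_diff_word_carrier:
  assumes w: "w \<in> bwords (Suc n) x" shows "bar_diff_word w \<in> carrier (bfree n x)"
proof -
  have len: "length w = Suc n" using w by (simp add: bwords_def)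
  show ?thesis
    unfolding bar_diff_word_def
    apply (intro bfree_add bfree_cmul bfree_of bfree_sum)
      apply (rule bd_word1_bwords[OF w])
     apply (rule bd_wordM_bwords[OF w]) using len apply auto[2]
    apply (rule bd_wordL_bwords[OF w])
    done
qed

lemma bar_diff_word_0:
  assumes w: "w \<in> bwords (Suc 0) x" shows "bar_diff_word w = 0"
proof -
  obtain c where c: "w = [c]" using w by (cases w) (auto simp: bwords_def)
  show ?thesis using c frag_cmul_cancel[of "ZM_eps (snd c)" "frag_of []"]
    by (simp add: bar_diff_word_def act_word_def)
qed

lemma NN_bar_diff_word:
  assumes w: "w \<in> bwords (Suc n) x" and n: "1 \<le> n"
  shows "NN x (bar_diff_word w) = Nz (frag_extend Dk (Tw (map snd w)))"
proof -
  define as where "as = map snd w"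
  have len: "length w = Suc n" and lt: "\<forall>(z, a) \<in> set w. a \<in> carrier (ZM z)"
    using w by (auto simp: bwords_def)
  obtain c w' where cw: "w = c # w'" using len by (cases w) auto
  have w'ne: "w' \<noteq> []" using len n cw by auto
  have blne: "butlast w \<noteq> []" using len n by (cases w) auto
  define T where "T = Tw as"
  have kT: "length (snd k) = Suc n" if "k \<in> Poly_Mapping.keys T" for k
    using keys_Tw_len[of as] that len by (auto simp: T_def as_def)
  have "frag_extend Dk T = frag_extend (\<lambda>k. D1k k + (\<Sum>i\<in>{1..<Suc n}. frag_cmul ((-1) ^ i) (Mk i k))
          + frag_cmul ((-1) ^ Suc n) (DLk k)) T"
    using kT by (intro frag_extend_eq) (simp add: Dk_def)
  also have "\<dots> = frag_extend D1k T + (\<Sum>i\<in>{1..<Suc n}. frag_cmul ((-1) ^ i) (frag_extend (Mk i) T))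
          + frag_cmul ((-1) ^ Suc n) (frag_extend DLk T)"
    by (simp add: frag_extend_add_fun frag_extend_sum_fun frag_extend_cmul_fun)
  finally have R: "frag_extend Dk T = frag_extend D1k T + (\<Sum>i\<in>{1..<Suc n}. frag_cmul ((-1) ^ i) (frag_extend (Mk i) T))
          + frag_cmul ((-1) ^ Suc n) (frag_extend DLk T)" .
  have c1: "\<And>p. p \<in> Poly_Mapping.keys (snd c) \<Longrightarrow> fst p * snd p = fst c"
    using lt cw by (auto simp: carrier_ZM)
  have D1: "frag_extend D1k T = frag_cmul (ZM_eps (snd c)) (Uy (fst c) (Tw (map snd w')))"
    using D1k_pL[OF c1] cw by (simp add: T_def as_def)
  have lastin: "last w \<in> set w" using len by (cases w) auto
  have wne: "w \<noteq> []" using len by auto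
  have "snd (last w) \<in> carrier (ZM (fst (last w)))" using lt lastin by (cases "last w") auto
  then have cL: "\<And>p. p \<in> Poly_Mapping.keys (last as) \<Longrightarrow> fst p * snd p = fst (last w)"
    using wne by (auto simp: carrier_ZM as_def last_map)
  have asne: "as \<noteq> []" using len by (auto simp: as_def)
  have DL: "frag_extend DLk T = frag_cmul (ZM_eps (last as)) (Uy (fst (last w)) (Tw (butlast as)))"
    unfolding T_def by (rule DLk_Tw[OF asne cL])
  have MT: "frag_extend (Mk i) T = Tw (map snd (take (i - 1) w @ [(fst (w!(i - 1)) * fst (w!i), ZM_mult (snd (w!(i - 1))) (snd (w!i)))] @ drop (Suc i) w))"
    if "i \<in> {1..<Suc n}" for i
  proof -
    have i1: "i - 1 < length w" "1 \<le> i" "i < length as" using that len by (auto simp: as_def)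
    show ?thesis using Mk_Tw[OF i1(2,3)] i1 by (simp add: T_def as_def take_map drop_map)
  qed
  have L1: "NN x (frag_of (act_word (fst (hd w)) (tl w))) = Nz (Uy (fst c) (Tw (map snd w')))"
  proof -
    have ne: "act_word (fst c) w' \<noteq> []" using w'ne by (simp add: act_word_def)
    have "Nw x (act_word (fst c) w') = Nz (Tw (map snd (act_word (fst c) w')))" using ne by (simp add: Nw_def)
    also have "\<dots> = Nz (Uy (fst c) (Tw (map snd w')))" using Tw_act_word[OF w'ne] by simp
    finally show ?thesis using cw by simp
  qed
  have LL: "NN x (frag_of (act_word (fst (last w)) (butlast w))) = Nz (Uy (fst (last w)) (Tw (butlast as)))"
    using blne by (simp add: Nw_def Tw_act_word as_def map_butlast del: Tw.simps)
      (simp add: act_word_def)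
  have LM: "NN x (frag_of (take (i - 1) w @ [(fst (w!(i - 1)) * fst (w!i), ZM_mult (snd (w!(i - 1))) (snd (w!i)))] @ drop (Suc i) w))
        = Nz (frag_extend (Mk i) T)" if "i \<in> {1..<Suc n}" for i
    using MT[OF that] by (simp add: Nw_def)
  have "NN x (bar_diff_word w) =
      frag_cmul (ZM_eps (snd c)) (Nz (Uy (fst c) (Tw (map snd w'))))
      + (\<Sum>i\<in>{1..<Suc n}. frag_cmul ((-1) ^ i) (Nz (frag_extend (Mk i) T)))
      + frag_cmul ((-1) ^ Suc n * ZM_eps (last as)) (Nz (Uy (fst (last w)) (Tw (butlast as))))"
    unfolding bar_diff_word_def NN_add NN_cmul NN_sum L1 LL len
    using LM cw by (simp add: as_def last_map)
  also have "\<dots> = Nz (frag_extend Dk T)"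
    unfolding R D1 DL by (simp add: Nz_add Nz_cmul Nz_sum)
  finally show ?thesis by (simp add: T_def as_def)
qed

definition DD :: "(('m::comm_monoid_mult \<times> 'm list) \<Rightarrow>\<^sub>0 int) \<Rightarrow> (('m \<times> 'm list) \<Rightarrow>\<^sub>0 int)" where
  "DD Q = Nz (frag_extend Dk Q)"

definition bd_ext :: "('m::comm_monoid_mult bword \<Rightarrow>\<^sub>0 int) \<Rightarrow> ('m bword \<Rightarrow>\<^sub>0 int)" where
  "bd_ext r = frag_extend bar_diff_word r"

lemma DD_alt: "DD Q = frag_extend (\<lambda>k. Nz (Dk k)) Q"
  by (simp add: DD_def Nz_def frag_extend_extend)

lemma DD_extend: "DD (frag_extend g r) = frag_extend (\<lambda>w. DD (g w)) r"
  by (simp add: DD_alt frag_extend_extend)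

lemma DD_Nz:
  assumes "\<And>k. k \<in> Poly_Mapping.keys Q \<Longrightarrow> 2 \<le> length (snd k)"
  shows "DD (Nz Q) = DD Q"
proof -
  have "DD (Nz Q) = frag_extend (\<lambda>k. if 1 \<in> set (snd k) then 0 else Nz (Dk k)) Q"
    by (simp add: DD_alt Nz_def frag_extend_extend if_distrib[of "frag_extend _"] cong: if_cong)
  also have "\<dots> = frag_extend (\<lambda>k. Nz (Dk k)) Q"
  proof (intro frag_extend_eq)
    fix k assume "k \<in> Poly_Mapping.keys Q"
    then have l: "2 \<le> length (snd k)" by (rule assms)
    show "(if 1 \<in> set (snd k) then 0 else Nz (Dk k)) = Nz (Dk k)"
      using Nz_Dk_deg[OF l, of "fst k"] by simp
  qed
  finally show ?thesis by (simp add: DD_alt)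
qed

lemma bd_ext_carrier:
  assumes "r \<in> carrier (bfree (Suc n) x)" shows "bd_ext r \<in> carrier (bfree n x)"
  unfolding bd_ext_def bfree_def carrier_free_Abelian_group_iff
proof (rule keys_frag_extend_sub)
  fix w assume "w \<in> Poly_Mapping.keys r"
  then have "w \<in> bwords (Suc n) x" using assms by (auto simp: bfree_def)
  then show "Poly_Mapping.keys (bar_diff_word w) \<subseteq> bwords n x"
    using bar_diff_word_carrier by (simp add: bfree_def)
qed

lemma bd_ext_0:
  assumes "r \<in> carrier (bfree (Suc 0) x)" shows "bd_ext r = 0"
  unfolding bd_ext_def
proof (rule frag_extend_eq_0)
  fix w assume "w \<in> Poly_Mapping.keys r"
  then have "w \<in> bwords (Suc 0) x" using assms by (auto simp: bfree_def)
  then show "bar_diff_word w = 0" by (rule bar_diff_word_0)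
qed

lemma NN_bd_ext:
  assumes r: "r \<in> carrier (bfree (Suc n) x)" and n: "1 \<le> n"
  shows "NN x (bd_ext r) = DD (NN x r)"
proof -
  have "NN x (bd_ext r) = frag_extend (\<lambda>w. NN x (bar_diff_word w)) r"
    by (simp add: NN_def bd_ext_def frag_extend_extend)
  also have "\<dots> = frag_extend (\<lambda>w. DD (Nw x w)) r"
  proof (intro frag_extend_eq)
    fix w assume "w \<in> Poly_Mapping.keys r"
    then have w: "w \<in> bwords (Suc n) x" using r by (auto simp: bfree_def)
    then have ne: "w \<noteq> []" and len: "length w = Suc n" by (auto simp: bwords_def)
    have lk: "2 \<le> length (snd k)" if "k \<in> Poly_Mapping.keys (Tw (map snd w))" for k
      using keys_Tw_len[of "map snd w"] that len n by auto
    have "NN x (bar_diff_word w) = DD (Tw (map snd w))"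
      using NN_bar_diff_word[OF w n] by (simp add: DD_def)
    also have "\<dots> = DD (Nz (Tw (map snd w)))" using DD_Nz[of "Tw (map snd w)"] lk by simp
    also have "\<dots> = DD (Nw x w)" using ne by (simp add: Nw_def)
    finally show "NN x (bar_diff_word w) = DD (Nw x w)" .
  qed
  also have "\<dots> = DD (NN x r)" by (simp add: NN_def DD_extend)
  finally show ?thesis .
qed

lemma BZM_diff_class:
  assumes r: "r \<in> carrier (bfree (Suc n) x)"
  shows "BZM_diff (Suc n) x (bclass (Suc n) x r) = bclass n x (bd_ext r)"
proof -
  let ?s = "SOME s. s \<in> bclass (Suc n) x r"
  have s: "?s \<in> carrier (bfree (Suc n) x)" "NN x ?s = NN x r" using some_rep[OF r] by auto
  have "bclass n x (bd_ext ?s) = bclass n x (bd_ext r)"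
  proof (cases "n = 0")
    case True
    have a: "?s \<in> carrier (bfree (Suc 0) x)" "r \<in> carrier (bfree (Suc 0) x)" using True s(1) r by simp_all
    show ?thesis using bd_ext_0[OF a(1)] bd_ext_0[OF a(2)] by simp
  next
    case False
    then show ?thesis using bd_ext_carrier[OF s(1)] bd_ext_carrier[OF r] s(2)
      by (simp add: bclass_eq_iff NN_bd_ext[OF s(1)] NN_bd_ext[OF r])
  qed
  then show ?thesis by (simp add: BZM_diff_def bd_ext_def)
qed

lemma BZM_diff_carrier:
  assumes "c \<in> carrier (BZM (Suc n) x)" shows "BZM_diff (Suc n) x c \<in> carrier (BZM n x)"
proof -
  obtain r where r: "r \<in> carrier (bfree (Suc n) x)" "c = bclass (Suc n) x r" using assms by (auto simp: carrier_BZM)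
  show ?thesis using BZM_diff_class[OF r(1)] bclass_carrier[OF bd_ext_carrier[OF r(1)]] r(2) by simp
qed

lemma bd_ext_add: "bd_ext (r + s) = bd_ext r + bd_ext s"
  by (simp add: bd_ext_def frag_extend_add)

lemma BZM_diff_mult:
  assumes "c1 \<in> carrier (BZM (Suc n) x)" "c2 \<in> carrier (BZM (Suc n) x)"
  shows "BZM_diff (Suc n) x (c1 \<otimes>\<^bsub>BZM (Suc n) x\<^esub> c2) = BZM_diff (Suc n) x c1 \<otimes>\<^bsub>BZM n x\<^esub> BZM_diff (Suc n) x c2"
proof -
  obtain r1 where r1: "r1 \<in> carrier (bfree (Suc n) x)" "c1 = bclass (Suc n) x r1" using assms(1) by (auto simp: carrier_BZM)
  obtain r2 where r2: "r2 \<in> carrier (bfree (Suc n) x)" "c2 = bclass (Suc n) x r2" using assms(2) by (auto simp: carrier_BZM)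
  have "c1 \<otimes>\<^bsub>BZM (Suc n) x\<^esub> c2 = bclass (Suc n) x (r1 + r2)" using r1 r2 mult_BZM by simp
  then show ?thesis using r1 r2 BZM_diff_class[OF r1(1)] BZM_diff_class[OF r2(1)]
      BZM_diff_class[OF bfree_add[OF r1(1) r2(1)]]
      mult_BZM[OF bd_ext_carrier[OF r1(1)] bd_ext_carrier[OF r2(1)]]
    by (simp add: bd_ext_add)
qed

lemma Uy_of: "Uy y (frag_of k) = frag_of (y * fst k, snd k)" by (simp add: Uy_def)
lemma Uy_add: "Uy y (a + b) = Uy y a + Uy y b" by (simp add: Uy_def frag_extend_add)
lemma Uy_cmul: "Uy y (frag_cmul c a) = frag_cmul c (Uy y a)" by (simp add: Uy_def frag_extend_cmul)
lemma Uy_0 [simp]: "Uy y 0 = 0" by (simp add: Uy_def)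
lemma Uy_sum: "Uy y (sum f I) = (\<Sum>i\<in>I. Uy y (f i))"
  by (induction I rule: infinite_finite_induct) (auto simp: Uy_add)

lemma Dk_Uy: "Dk (y * fst k, snd k) = Uy y (Dk k)"
  by (simp add: Dk_def D1k_def Mk_def DLk_def Uy_add Uy_cmul Uy_sum Uy_of mult.assoc)

lemma DD_Uy: "DD (Uy y Q) = Uy y (DD Q)"
proof -
  have "DD (Uy y Q) = frag_extend (\<lambda>k. Nz (Dk (y * fst k, snd k))) Q"
    by (simp add: DD_alt Uy_def frag_extend_extend)
  also have "\<dots> = frag_extend (\<lambda>k. Uy y (Nz (Dk k))) Q"
    by (simp add: Dk_Uy Nz_Uy)
  also have "\<dots> = Uy y (DD Q)" by (simp add: DD_alt Uy_def frag_extend_extend)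
  finally show ?thesis .
qed

lemma act_ext_0 [simp]: "act_ext y 0 = 0" by (simp add: act_ext_def)

lemma BZM_diff_act:
  assumes c: "c \<in> carrier (BZM (Suc n) x)"
  shows "BZM_diff (Suc n) (x * y) (BZM_act (Suc n) x y c) = BZM_act n x y (BZM_diff (Suc n) x c)"
proof -
  obtain r where r: "r \<in> carrier (bfree (Suc n) x)" "c = bclass (Suc n) x r" using c by (auto simp: carrier_BZM)
  have ar: "act_ext y r \<in> carrier (bfree (Suc n) (x * y))" by (rule act_ext_carrier[OF r(1)])
  have L: "BZM_diff (Suc n) (x * y) (BZM_act (Suc n) x y c) = bclass n (x * y) (bd_ext (act_ext y r))"
    using r BZM_act_class[OF r(1)] BZM_diff_class[OF ar] by simp
  have R: "BZM_act n x y (BZM_diff (Suc n) x c) = bclass n (x * y) (act_ext y (bd_ext r))"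
    using r BZM_diff_class[OF r(1)] BZM_act_class[OF bd_ext_carrier[OF r(1)]] by simp
  have "bclass n (x * y) (bd_ext (act_ext y r)) = bclass n (x * y) (act_ext y (bd_ext r))"
  proof (cases "n = 0")
    case True
    have a: "act_ext y r \<in> carrier (bfree (Suc 0) (x * y))" "r \<in> carrier (bfree (Suc 0) x)" using True ar r(1) by simp_all
    show ?thesis using bd_ext_0[OF a(1)] bd_ext_0[OF a(2)] by simp
  next
    case False
    have "NN (x * y) (bd_ext (act_ext y r)) = NN (x * y) (act_ext y (bd_ext r))"
      using False by (simp add: NN_bd_ext[OF ar] NN_bd_ext[OF r(1)] NN_act_ext DD_Uy)
    then show ?thesis
      using bd_ext_carrier[OF ar] act_ext_carrier[OF bd_ext_carrier[OF r(1)]] by (simp add: bclass_eq_iff)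
  qed
  then show ?thesis using L R by simp
qed

section \<open>Cohomology of isomorphic complexes\<close>

lemma r_coset_upd: "H #>\<^bsub>G\<lparr>carrier := K\<rparr>\<^esub> a = H #>\<^bsub>G\<^esub> a"
  by (simp add: r_coset_def)

lemma set_mult_upd: "H <#>\<^bsub>G\<lparr>carrier := K\<rparr>\<^esub> J = H <#>\<^bsub>G\<^esub> J"
  by (simp add: set_mult_def)

lemma image_r_coset:
  assumes "H \<subseteq> carrier G" "a \<in> carrier G"
    "\<And>x y. x \<in> carrier G \<Longrightarrow> y \<in> carrier G \<Longrightarrow> F (x \<otimes>\<^bsub>G\<^esub> y) = F x \<otimes>\<^bsub>G'\<^esub> F y"
  shows "F ` (H #>\<^bsub>G\<^esub> a) = (F ` H) #>\<^bsub>G'\<^esub> (F a)"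
proof -
  have "F ` (H #>\<^bsub>G\<^esub> a) = (\<Union>h\<in>H. {F (h \<otimes>\<^bsub>G\<^esub> a)})" unfolding r_coset_def by blast
  also have "\<dots> = (\<Union>h\<in>H. {F h \<otimes>\<^bsub>G'\<^esub> F a})"
  proof (intro SUP_cong refl)
    fix h assume "h \<in> H"
    then show "{F (h \<otimes>\<^bsub>G\<^esub> a)} = {F h \<otimes>\<^bsub>G'\<^esub> F a}" using assms by auto
  qed
  also have "\<dots> = (F ` H) #>\<^bsub>G'\<^esub> (F a)" unfolding r_coset_def by blast
  finally show ?thesis .
qed

lemma image_set_mult:
  assumes "H \<subseteq> carrier G" "J \<subseteq> carrier G"
    "\<And>x y. x \<in> carrier G \<Longrightarrow> y \<in> carrier G \<Longrightarrow> F (x \<otimes>\<^bsub>G\<^esub> y) = F x \<otimes>\<^bsub>G'\<^esub> F y"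
  shows "F ` (H <#>\<^bsub>G\<^esub> J) = (F ` H) <#>\<^bsub>G'\<^esub> (F ` J)"
proof -
  have "F ` (H <#>\<^bsub>G\<^esub> J) = (\<Union>h\<in>H. \<Union>k\<in>J. {F (h \<otimes>\<^bsub>G\<^esub> k)})" unfolding set_mult_def by blast
  also have "\<dots> = (\<Union>h\<in>H. \<Union>k\<in>J. {F h \<otimes>\<^bsub>G'\<^esub> F k})" using assms by (intro SUP_cong refl) blast
  also have "\<dots> = (F ` H) <#>\<^bsub>G'\<^esub> (F ` J)" unfolding set_mult_def by blast
  finally show ?thesis .
qed

lemma cohomology_iso:
  fixes G :: "nat \<Rightarrow> 'g monoid" and G' :: "nat \<Rightarrow> 'h monoid"
  assumes bij: "\<And>k. bij_betw (F k) (carrier (G k)) (carrier (G' k))"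
    and hom: "\<And>x y. x \<in> carrier (G n) \<Longrightarrow> y \<in> carrier (G n) \<Longrightarrow> F n (x \<otimes>\<^bsub>G n\<^esub> y) = F n x \<otimes>\<^bsub>G' n\<^esub> F n y"
    and closed: "\<And>x y. x \<in> carrier (G n) \<Longrightarrow> y \<in> carrier (G n) \<Longrightarrow> x \<otimes>\<^bsub>G n\<^esub> y \<in> carrier (G n)"
    and chain: "\<And>k x. x \<in> carrier (G k) \<Longrightarrow> F (Suc k) (d k x) = d' k (F k x)"
    and dcar: "\<And>k x. x \<in> carrier (G k) \<Longrightarrow> d k x \<in> carrier (G (Suc k))"
    and one: "\<And>k. \<one>\<^bsub>G k\<^esub> \<in> carrier (G k)" "\<And>k. F k (\<one>\<^bsub>G k\<^esub>) = \<one>\<^bsub>G' k\<^esub>"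
  shows "cohomology G d n \<cong> cohomology G' d' n"
proof -
  define K where "K = kernel (G n) (G (Suc n)) (d n)"
  define K' where "K' = kernel (G' n) (G' (Suc n)) (d' n)"
  define I where "I = (if n = 0 then {\<one>\<^bsub>G 0\<^esub>} else d (n - 1) ` carrier (G (n - 1)))"
  define I' where "I' = (if n = 0 then {\<one>\<^bsub>G' 0\<^esub>} else d' (n - 1) ` carrier (G' (n - 1)))"
  define R where "R = (G n)\<lparr>carrier := K\<rparr>"
  define R' where "R' = (G' n)\<lparr>carrier := K'\<rparr>"
  have coh: "cohomology G d n = R Mod I" "cohomology G' d' n = R' Mod I'"
    by (simp_all add: cohomology_def R_def R'_def K_def K'_def I_def I'_def)
  have inj: "inj_on (F k) (carrier (G k))" for k using bij[of k] by (simp add: bij_betw_def)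
  have img: "F k ` carrier (G k) = carrier (G' k)" for k using bij[of k] by (simp add: bij_betw_def)
  have Kc: "K \<subseteq> carrier (G n)" by (auto simp: K_def kernel_def)
  have Ic: "I \<subseteq> carrier (G n)"
  proof (cases "n = 0")
    case True then show ?thesis using one(1)[of 0] by (simp add: I_def)
  next
    case False
    then have "Suc (n - 1) = n" by simp
    then show ?thesis using dcar[of _ "n - 1"] False by (auto simp: I_def)
  qed
  have FK: "F n ` K = K'"
  proof
    show "F n ` K \<subseteq> K'"
    proof
      fix y assume "y \<in> F n ` K"
      then obtain x where x: "x \<in> carrier (G n)" "d n x = \<one>\<^bsub>G (Suc n)\<^esub>" "y = F n x" by (auto simp: K_def kernel_def)
      have "d' n y = F (Suc n) (d n x)" using chain[OF x(1)] x(3) by simp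
      also have "\<dots> = \<one>\<^bsub>G' (Suc n)\<^esub>" using x(2) one(2) by simp
      finally show "y \<in> K'" using x img by (auto simp: K'_def kernel_def)
    qed
  next
    show "K' \<subseteq> F n ` K"
    proof
      fix y assume y: "y \<in> K'"
      then obtain x where x: "x \<in> carrier (G n)" "y = F n x" using img[of n] by (auto simp: K'_def kernel_def)
      have "F (Suc n) (d n x) = d' n y" using chain[OF x(1)] x(2) by simp
      also have "\<dots> = \<one>\<^bsub>G' (Suc n)\<^esub>" using y by (simp add: K'_def kernel_def)
      also have "\<dots> = F (Suc n) (\<one>\<^bsub>G (Suc n)\<^esub>)" using one(2) by simp
      finally have "d n x = \<one>\<^bsub>G (Suc n)\<^esub>"
        using inj[of "Suc n"] dcar[OF x(1)] one(1) by (auto dest: inj_onD)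
      then show "y \<in> F n ` K" using x by (auto simp: K_def kernel_def)
    qed
  qed
  have FI: "F n ` I = I'"
  proof (cases "n = 0")
    case True then show ?thesis using one(2)[of 0] by (simp add: I_def I'_def)
  next
    case False
    then have sn: "Suc (n - 1) = n" by simp
    have "F n ` I = (\<lambda>x. F (Suc (n - 1)) (d (n - 1) x)) ` carrier (G (n - 1))"
      using False sn by (simp add: I_def image_image)
    also have "\<dots> = (\<lambda>x. d' (n - 1) (F (n - 1) x)) ` carrier (G (n - 1))"
      using chain by (intro image_cong) auto
    also have "\<dots> = d' (n - 1) ` carrier (G' (n - 1))"
      using img[of "n - 1"] by (simp add: image_image[symmetric])
    finally show ?thesis using False by (simp add: I'_def)
  qed
  have cosc: "I #>\<^bsub>G n\<^esub> a \<subseteq> carrier (G n)" if "a \<in> K" for a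
    using Ic Kc that closed unfolding r_coset_def by blast
  have carR: "carrier (R Mod I) = (\<lambda>a. I #>\<^bsub>G n\<^esub> a) ` K"
    by (simp add: carrier_FactGroup R_def r_coset_upd)
  have carR': "carrier (R' Mod I') = (\<lambda>a. I' #>\<^bsub>G' n\<^esub> a) ` K'"
    by (simp add: carrier_FactGroup R'_def r_coset_upd)
  have Fcos: "F n ` (I #>\<^bsub>G n\<^esub> a) = I' #>\<^bsub>G' n\<^esub> F n a" if "a \<in> K" for a
    using image_r_coset[OF Ic _ hom, of a] that Kc FI by auto
  have "(\<lambda>C. F n ` C) \<in> iso (R Mod I) (R' Mod I')"
  proof (unfold iso_def, intro CollectI conjI)
    show "(\<lambda>C. F n ` C) \<in> hom (R Mod I) (R' Mod I')"
    proof (rule homI)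
      fix C assume "C \<in> carrier (R Mod I)"
      then obtain a where a: "a \<in> K" "C = I #>\<^bsub>G n\<^esub> a" using carR by auto
      show "F n ` C \<in> carrier (R' Mod I')" using a Fcos FK carR' by auto
    next
      fix C1 C2 assume "C1 \<in> carrier (R Mod I)" "C2 \<in> carrier (R Mod I)"
      then obtain a1 a2 where a: "a1 \<in> K" "C1 = I #>\<^bsub>G n\<^esub> a1" "a2 \<in> K" "C2 = I #>\<^bsub>G n\<^esub> a2"
        using carR by auto
      have c: "C1 \<subseteq> carrier (G n)" "C2 \<subseteq> carrier (G n)" using cosc[OF a(1)] cosc[OF a(3)] a by auto
      show "F n ` (C1 \<otimes>\<^bsub>R Mod I\<^esub> C2) = F n ` C1 \<otimes>\<^bsub>R' Mod I'\<^esub> F n ` C2"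
        using image_set_mult[OF c hom] by (simp add: R_def R'_def set_mult_upd)
    qed
  next
    show "bij_betw (\<lambda>C. F n ` C) (carrier (R Mod I)) (carrier (R' Mod I'))"
    proof (rule bij_betw_imageI)
      show "inj_on (\<lambda>C. F n ` C) (carrier (R Mod I))"
      proof (rule inj_onI)
        fix C1 C2 assume c1: "C1 \<in> carrier (R Mod I)" and c2: "C2 \<in> carrier (R Mod I)" and e: "F n ` C1 = F n ` C2"
        obtain a1 where a1: "a1 \<in> K" "C1 = I #>\<^bsub>G n\<^esub> a1" using c1 carR by auto
        obtain a2 where a2: "a2 \<in> K" "C2 = I #>\<^bsub>G n\<^esub> a2" using c2 carR by auto
        have "C1 \<subseteq> carrier (G n)" "C2 \<subseteq> carrier (G n)" using cosc[OF a1(1)] cosc[OF a2(1)] a1 a2 by auto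
        then show "C1 = C2" using inj[of n] e by (simp add: inj_on_image_eq_iff)
      qed
    next
      have "(\<lambda>C. F n ` C) ` carrier (R Mod I) = (\<lambda>a. I' #>\<^bsub>G' n\<^esub> F n a) ` K"
        unfolding carR image_image using Fcos by (intro image_cong) auto
      also have "\<dots> = (\<lambda>a. I' #>\<^bsub>G' n\<^esub> a) ` (F n ` K)" by (simp add: image_image)
      finally show "(\<lambda>C. F n ` C) ` carrier (R Mod I) = carrier (R' Mod I')" unfolding carR' FK .
    qed
  qed
  then have "R Mod I \<cong> R' Mod I'" by (rule is_isoI)
  then show ?thesis using coh by simp
qed

locale hm =
  fixes A :: "'m::comm_monoid_mult \<Rightarrow> 'a monoid" and act :: "'m \<Rightarrow> 'm \<Rightarrow> 'a \<Rightarrow> 'a"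
  assumes HM: "HM_module A act"
begin

lemma AG: "comm_group (A x)" using HM by (simp add: HM_module_def)
lemma AGg: "group (A x)" using AG[of x] by (simp add: comm_group_def)
lemma act_hom: "act x y \<in> hom (A x) (A (x * y))" using HM by (simp add: HM_module_def)
lemma act_1: "a \<in> carrier (A x) \<Longrightarrow> act x 1 a = a" using HM by (simp add: HM_module_def)
lemma act_comp: "a \<in> carrier (A x) \<Longrightarrow> act (x * y) z (act x y a) = act x (y * z) a"
  using HM by (simp add: HM_module_def)
lemma act_closed: "a \<in> carrier (A x) \<Longrightarrow> act x y a \<in> carrier (A (x * y))"
  using act_hom[of x y] by (auto simp: hom_def)
lemma act_mult: "a \<in> carrier (A x) \<Longrightarrow> b \<in> carrier (A x) \<Longrightarrow> act x y (a \<otimes>\<^bsub>A x\<^esub> b) = act x y a \<otimes>\<^bsub>A (x * y)\<^esub> act x y b"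
  using act_hom[of x y] by (auto simp: hom_def)
lemma act_one: "act x y \<one>\<^bsub>A x\<^esub> = \<one>\<^bsub>A (x * y)\<^esub>"
  using group_hom.hom_one[of "A x" "A (x * y)" "act x y"] act_hom AGg
  by (simp add: group_hom_def group_hom_axioms_def)
lemma act_pow: "a \<in> carrier (A x) \<Longrightarrow> act x y (a [^]\<^bsub>A x\<^esub> (k::int)) = act x y a [^]\<^bsub>A (x * y)\<^esub> k"
  using hom_int_pow[OF act_hom _ AGg AGg] by blast

lemma hom_one_A: "h \<in> hom (BZM n x) (A x) \<Longrightarrow> h \<one>\<^bsub>BZM n x\<^esub> = \<one>\<^bsub>A x\<^esub>"
  using group_hom.hom_one[of "BZM n x" "A x" h]
  by (simp add: group_hom_def group_hom_axioms_def BZM_group AGg)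

lemma HomB_carrier_iff:
  "\<phi> \<in> carrier (HomB A act n) \<longleftrightarrow>
     (\<forall>x. \<phi> x \<in> hom (BZM n x) (A x) \<and> \<phi> x \<in> extensional (carrier (BZM n x))) \<and>
     (\<forall>x y c. c \<in> carrier (BZM n x) \<longrightarrow> \<phi> (x * y) (BZM_act n x y c) = act x y (\<phi> x c))"
  by (simp add: HomB_def)

lemma HomB_mult: "\<phi> \<otimes>\<^bsub>HomB A act n\<^esub> \<psi> = (\<lambda>x c. if c \<in> carrier (BZM n x) then \<phi> x c \<otimes>\<^bsub>A x\<^esub> \<psi> x c else undefined)"
  by (simp add: HomB_def)

lemma HomB_one: "\<one>\<^bsub>HomB A act n\<^esub> = (\<lambda>x c. if c \<in> carrier (BZM n x) then \<one>\<^bsub>A x\<^esub> else undefined)"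
  by (simp add: HomB_def)

lemma HomB_one_carrier: "\<one>\<^bsub>HomB A act n\<^esub> \<in> carrier (HomB A act n)"
  unfolding HomB_carrier_iff HomB_one
proof (intro conjI allI impI)
  fix x
  show "(\<lambda>c. if c \<in> carrier (BZM n x) then \<one>\<^bsub>A x\<^esub> else undefined) \<in> hom (BZM n x) (A x)"
    using monoid.m_closed[OF group.is_monoid[OF BZM_group]] monoid.one_closed[OF group.is_monoid[OF AGg]]
      monoid.l_one[OF group.is_monoid[OF AGg]]
    by (intro homI) auto
  show "(\<lambda>c. if c \<in> carrier (BZM n x) then \<one>\<^bsub>A x\<^esub> else undefined) \<in> extensional (carrier (BZM n x))"
    by (simp add: extensional_def)
next
  fix x y :: 'm and c assume "c \<in> carrier (BZM n x)"
  then show "(if BZM_act n x y c \<in> carrier (BZM n (x * y)) then \<one>\<^bsub>A (x * y)\<^esub> else undefined) =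
             act x y (if c \<in> carrier (BZM n x) then \<one>\<^bsub>A x\<^esub> else undefined)"
    by (simp add: BZM_act_carrier act_one)
qed

lemma HomB_closed:
  assumes p: "\<phi> \<in> carrier (HomB A act n)" and q: "\<psi> \<in> carrier (HomB A act n)"
  shows "\<phi> \<otimes>\<^bsub>HomB A act n\<^esub> \<psi> \<in> carrier (HomB A act n)"
  unfolding HomB_mult HomB_carrier_iff
proof (intro conjI allI impI)
  fix x
  have hp: "\<phi> x \<in> hom (BZM n x) (A x)" and hq: "\<psi> x \<in> hom (BZM n x) (A x)"
    using p q by (auto simp: HomB_carrier_iff)
  show "(\<lambda>c. if c \<in> carrier (BZM n x) then \<phi> x c \<otimes>\<^bsub>A x\<^esub> \<psi> x c else undefined) \<in> hom (BZM n x) (A x)"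
  proof (rule homI)
    fix c assume "c \<in> carrier (BZM n x)"
    then show "(if c \<in> carrier (BZM n x) then \<phi> x c \<otimes>\<^bsub>A x\<^esub> \<psi> x c else undefined) \<in> carrier (A x)"
      using hp hq monoid.m_closed[OF group.is_monoid[OF AGg[of x]]] by (auto simp: hom_def Pi_def)
  next
    fix c1 c2 assume c: "c1 \<in> carrier (BZM n x)" "c2 \<in> carrier (BZM n x)"
    have c12: "c1 \<otimes>\<^bsub>BZM n x\<^esub> c2 \<in> carrier (BZM n x)" using c monoid.m_closed[OF group.is_monoid[OF BZM_group]] by blast
    have m: "\<phi> x c1 \<in> carrier (A x)" "\<phi> x c2 \<in> carrier (A x)" "\<psi> x c1 \<in> carrier (A x)" "\<psi> x c2 \<in> carrier (A x)"
      using c hp hq by (auto simp: hom_def)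
    have "\<phi> x (c1 \<otimes>\<^bsub>BZM n x\<^esub> c2) \<otimes>\<^bsub>A x\<^esub> \<psi> x (c1 \<otimes>\<^bsub>BZM n x\<^esub> c2)
        = (\<phi> x c1 \<otimes>\<^bsub>A x\<^esub> \<phi> x c2) \<otimes>\<^bsub>A x\<^esub> (\<psi> x c1 \<otimes>\<^bsub>A x\<^esub> \<psi> x c2)"
      using c hp hq by (simp add: hom_mult)
    also have "\<dots> = (\<phi> x c1 \<otimes>\<^bsub>A x\<^esub> \<psi> x c1) \<otimes>\<^bsub>A x\<^esub> (\<phi> x c2 \<otimes>\<^bsub>A x\<^esub> \<psi> x c2)"
    proof -
      interpret cg: comm_group "A x" by (rule AG)
      show ?thesis using m by (simp add: cg.m_ac)
    qed
    finally show "(if c1 \<otimes>\<^bsub>BZM n x\<^esub> c2 \<in> carrier (BZM n x) then \<phi> x (c1 \<otimes>\<^bsub>BZM n x\<^esub> c2) \<otimes>\<^bsub>A x\<^esub> \<psi> x (c1 \<otimes>\<^bsub>BZM n x\<^esub> c2) else undefined)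
       = (if c1 \<in> carrier (BZM n x) then \<phi> x c1 \<otimes>\<^bsub>A x\<^esub> \<psi> x c1 else undefined) \<otimes>\<^bsub>A x\<^esub>
         (if c2 \<in> carrier (BZM n x) then \<phi> x c2 \<otimes>\<^bsub>A x\<^esub> \<psi> x c2 else undefined)"
      using c c12 by simp
  qed
  show "(\<lambda>c. if c \<in> carrier (BZM n x) then \<phi> x c \<otimes>\<^bsub>A x\<^esub> \<psi> x c else undefined) \<in> extensional (carrier (BZM n x))"
    by (simp add: extensional_def)
next
  fix x y :: 'm and c assume c: "c \<in> carrier (BZM n x)"
  have m: "\<phi> x c \<in> carrier (A x)" "\<psi> x c \<in> carrier (A x)"
    using c p q by (auto simp: HomB_carrier_iff hom_def)
  have "\<phi> (x * y) (BZM_act n x y c) = act x y (\<phi> x c)" "\<psi> (x * y) (BZM_act n x y c) = act x y (\<psi> x c)"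
    using c p q by (auto simp: HomB_carrier_iff)
  then show "(if BZM_act n x y c \<in> carrier (BZM n (x * y)) then \<phi> (x * y) (BZM_act n x y c) \<otimes>\<^bsub>A (x * y)\<^esub> \<psi> (x * y) (BZM_act n x y c) else undefined) =
         act x y (if c \<in> carrier (BZM n x) then \<phi> x c \<otimes>\<^bsub>A x\<^esub> \<psi> x c else undefined)"
    using c BZM_act_carrier[OF c] act_mult[OF m] by simp
qed

end

definition Phi :: "nat \<Rightarrow> ('m::comm_monoid_mult \<Rightarrow> ('m bword \<Rightarrow>\<^sub>0 int) set \<Rightarrow> 'a) \<Rightarrow> ('m list \<Rightarrow> 'a)" where
  "Phi n \<phi> = (\<lambda>xs. if length xs = n then \<phi> (prod_list xs) (bclass n (prod_list xs) (frag_of (gen xs))) else undefined)"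

definition gval :: "('m::comm_monoid_mult \<Rightarrow> 'm \<Rightarrow> 'a \<Rightarrow> 'a) \<Rightarrow> ('m list \<Rightarrow> 'a) \<Rightarrow> ('m \<times> 'm list) \<Rightarrow> 'a" where
  "gval act f k = act (prod_list (snd k)) (fst k) (f (snd k))"

definition hF :: "('m::comm_monoid_mult \<Rightarrow> 'a monoid) \<Rightarrow> ('m \<Rightarrow> 'm \<Rightarrow> 'a \<Rightarrow> 'a) \<Rightarrow> nat \<Rightarrow> ('m list \<Rightarrow> 'a) \<Rightarrow> 'm
                   \<Rightarrow> (('m \<times> 'm list) \<Rightarrow>\<^sub>0 int) \<Rightarrow> 'a" where
  "hF A act n f x = (SOME h. h \<in> hom (free_Abelian_group (Kset n x)) (A x) \<and> (\<forall>k\<in>Kset n x. h (frag_of k) = gval act f k))"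

definition Psi :: "('m::comm_monoid_mult \<Rightarrow> 'a monoid) \<Rightarrow> ('m \<Rightarrow> 'm \<Rightarrow> 'a \<Rightarrow> 'a) \<Rightarrow> nat \<Rightarrow> ('m list \<Rightarrow> 'a)
                   \<Rightarrow> ('m \<Rightarrow> ('m bword \<Rightarrow>\<^sub>0 int) set \<Rightarrow> 'a)" where
  "Psi A act n f = (\<lambda>x c. if c \<in> carrier (BZM n x) then hF A act n f x (NN x (SOME r. r \<in> c)) else undefined)"

lemma gen_bwords: "gen xs \<in> bwords (length xs) (prod_list xs)"
  using gen_carrier[of xs] by (simp add: bwords_def)

lemma cls_gen_carrier: "bclass (length xs) (prod_list xs) (frag_of (gen xs)) \<in> carrier (BZM (length xs) (prod_list xs))"
  by (rule bclass_carrier[OF bfree_of[OF gen_bwords]])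

lemma cls_gen_one:
  assumes "1 \<in> set xs"
  shows "bclass (length xs) (prod_list xs) (frag_of (gen xs)) = \<one>\<^bsub>BZM (length xs) (prod_list xs)\<^esub>"
proof -
  have ne: "xs \<noteq> []" using assms by auto
  have "NN (prod_list xs) (frag_of (gen xs)) = 0"
    using ne assms by (simp add: Nw_def Tw_gen Nz_of del: Tw.simps)
  moreover have z: "0 \<in> carrier (bfree (length xs) (prod_list xs))" by (simp add: bfree_def)
  ultimately show ?thesis unfolding one_BZM
    using bclass_eq_iff[OF bfree_of[OF gen_bwords[of xs]] z] by simp
qed

lemma cls_gen_carrier': "length xs = n \<Longrightarrow> bclass n (prod_list xs) (frag_of (gen xs)) \<in> carrier (BZM n (prod_list xs))"
  using cls_gen_carrier by blast

lemma free_hom_eq: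
  assumes G: "group G" and h1: "h1 \<in> hom (free_Abelian_group S) G" and h2: "h2 \<in> hom (free_Abelian_group S) G"
    and gen: "\<And>k. k \<in> S \<Longrightarrow> h1 (frag_of k) = h2 (frag_of k)"
    and Q: "Poly_Mapping.keys Q \<subseteq> S"
  shows "h1 Q = h2 Q"
proof -
  have gh1: "group_hom (free_Abelian_group S) G h1" using G h1 by (simp add: group_hom_def group_hom_axioms_def)
  have gh2: "group_hom (free_Abelian_group S) G h2" using G h2 by (simp add: group_hom_def group_hom_axioms_def)
  show ?thesis
  proof (rule free_Abelian_group_induct[where P="\<lambda>Q. h1 Q = h2 Q", OF Q])
    show "h1 0 = h2 0" using group_hom.hom_one[OF gh1] group_hom.hom_one[OF gh2] by simp
  next
    fix a b assume ka: "Poly_Mapping.keys a \<subseteq> S" and kb: "Poly_Mapping.keys b \<subseteq> S"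
      and ea: "h1 a = h2 a" and eb: "h1 b = h2 b"
    have e: "a - b = a \<otimes>\<^bsub>free_Abelian_group S\<^esub> inv\<^bsub>free_Abelian_group S\<^esub> b" using kb by simp
    have c: "a \<in> carrier (free_Abelian_group S)" "inv\<^bsub>free_Abelian_group S\<^esub> b \<in> carrier (free_Abelian_group S)"
            "b \<in> carrier (free_Abelian_group S)"
      using ka kb by auto
    have s1: "h1 (a - b) = h1 a \<otimes>\<^bsub>G\<^esub> inv\<^bsub>G\<^esub> (h1 b)"
      by (simp only: e hom_mult[OF h1 c(1) c(2)] group_hom.hom_inv[OF gh1 c(3)])
    have s2: "h2 (a - b) = h2 a \<otimes>\<^bsub>G\<^esub> inv\<^bsub>G\<^esub> (h2 b)"
      by (simp only: e hom_mult[OF h2 c(1) c(2)] group_hom.hom_inv[OF gh2 c(3)])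
    show "h1 (a - b) = h2 (a - b)" using s1 s2 ea eb by simp
  next
    fix k assume "k \<in> S" then show "h1 (frag_of k) = h2 (frag_of k)" by (rule gen)
  qed
qed

context hm
begin

lemma HomB_diff_carrier:
  assumes p: "\<phi> \<in> carrier (HomB A act n)"
  shows "HomB_diff A n \<phi> \<in> carrier (HomB A act (Suc n))"
  unfolding HomB_carrier_iff HomB_diff_def
proof (intro conjI allI impI)
  fix x :: 'm
  have hp: "\<phi> x \<in> hom (BZM n x) (A x)" using p by (auto simp: HomB_carrier_iff)
  show "(\<lambda>c. if c \<in> carrier (BZM (Suc n) x) then \<phi> x (BZM_diff (Suc n) x c) else undefined) \<in> hom (BZM (Suc n) x) (A x)"
  proof (rule homI)
    fix c assume "c \<in> carrier (BZM (Suc n) x)"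
    then show "(if c \<in> carrier (BZM (Suc n) x) then \<phi> x (BZM_diff (Suc n) x c) else undefined) \<in> carrier (A x)"
      using hp BZM_diff_carrier by (auto simp: hom_def)
  next
    fix c1 c2 assume c: "c1 \<in> carrier (BZM (Suc n) x)" "c2 \<in> carrier (BZM (Suc n) x)"
    have c12: "c1 \<otimes>\<^bsub>BZM (Suc n) x\<^esub> c2 \<in> carrier (BZM (Suc n) x)"
      using c monoid.m_closed[OF group.is_monoid[OF BZM_group]] by blast
    show "(if c1 \<otimes>\<^bsub>BZM (Suc n) x\<^esub> c2 \<in> carrier (BZM (Suc n) x) then \<phi> x (BZM_diff (Suc n) x (c1 \<otimes>\<^bsub>BZM (Suc n) x\<^esub> c2)) else undefined) =
       (if c1 \<in> carrier (BZM (Suc n) x) then \<phi> x (BZM_diff (Suc n) x c1) else undefined) \<otimes>\<^bsub>A x\<^esub>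
       (if c2 \<in> carrier (BZM (Suc n) x) then \<phi> x (BZM_diff (Suc n) x c2) else undefined)"
      using c c12 BZM_diff_mult[OF c] hom_mult[OF hp BZM_diff_carrier[OF c(1)] BZM_diff_carrier[OF c(2)]] by simp
  qed
  show "(\<lambda>c. if c \<in> carrier (BZM (Suc n) x) then \<phi> x (BZM_diff (Suc n) x c) else undefined) \<in> extensional (carrier (BZM (Suc n) x))"
    by (simp add: extensional_def)
next
  fix x y :: 'm and c assume c: "c \<in> carrier (BZM (Suc n) x)"
  have "\<phi> (x * y) (BZM_act n x y (BZM_diff (Suc n) x c)) = act x y (\<phi> x (BZM_diff (Suc n) x c))"
    using p BZM_diff_carrier[OF c] by (auto simp: HomB_carrier_iff)
  then show "(if BZM_act (Suc n) x y c \<in> carrier (BZM (Suc n) (x * y)) then \<phi> (x * y) (BZM_diff (Suc n) (x * y) (BZM_act (Suc n) x y c)) else undefined) =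
    act x y (if c \<in> carrier (BZM (Suc n) x) then \<phi> x (BZM_diff (Suc n) x c) else undefined)"
    using c BZM_act_carrier[OF c] BZM_diff_act[OF c] by simp
qed

lemma Phi_carrier:
  assumes p: "\<phi> \<in> carrier (HomB A act n)"
  shows "Phi n \<phi> \<in> carrier (Ccoch A n)"
proof -
  have r: "Phi n \<phi> xs \<in> carrier (A (prod_list xs)) \<and> (1 \<in> set xs \<longrightarrow> Phi n \<phi> xs = \<one>\<^bsub>A (prod_list xs)\<^esub>)"
    if l: "length xs = n" for xs
  proof -
    have hp: "\<phi> (prod_list xs) \<in> hom (BZM n (prod_list xs)) (A (prod_list xs))" using p by (auto simp: HomB_carrier_iff)
    have "Phi n \<phi> xs \<in> carrier (A (prod_list xs))"
      using cls_gen_carrier[of xs] hp l by (auto simp: Phi_def hom_def)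
    moreover have "Phi n \<phi> xs = \<one>\<^bsub>A (prod_list xs)\<^esub>" if "1 \<in> set xs"
      using cls_gen_one[OF that] hom_one_A[OF hp] l by (simp add: Phi_def)
    ultimately show ?thesis by blast
  qed
  show ?thesis unfolding Ccoch_def using r by (simp add: Phi_def)
qed

lemma Phi_mult:
  assumes "\<phi> \<in> carrier (HomB A act n)" "\<psi> \<in> carrier (HomB A act n)"
  shows "Phi n (\<phi> \<otimes>\<^bsub>HomB A act n\<^esub> \<psi>) = Phi n \<phi> \<otimes>\<^bsub>Ccoch A n\<^esub> Phi n \<psi>"
  by (rule ext) (simp add: Phi_def HomB_mult Ccoch_def cls_gen_carrier')

lemma Phi_one: "Phi n \<one>\<^bsub>HomB A act n\<^esub> = \<one>\<^bsub>Ccoch A n\<^esub>"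
  by (rule ext) (simp add: Phi_def HomB_one Ccoch_def cls_gen_carrier')

lemma Ccoch_one_carrier: "\<one>\<^bsub>Ccoch A n\<^esub> \<in> carrier (Ccoch A n)"
  using Phi_carrier[OF HomB_one_carrier] Phi_one by simp

end

lemma NN_free: "r \<in> carrier (bfree n x) \<Longrightarrow> NN x r \<in> carrier (free_Abelian_group (Kset n x))"
  using keys_NN by simp

lemma Uy_hom: "Uy y \<in> hom (free_Abelian_group (Kset n x)) (free_Abelian_group (Kset n (x * y)))"
proof (rule homI)
  fix Q assume Q: "Q \<in> carrier (free_Abelian_group (Kset n x))"
  have "Poly_Mapping.keys (Uy y Q) \<subseteq> Kset n (x * y)"
  proof
    fix k assume "k \<in> Poly_Mapping.keys (Uy y Q)"
    then obtain k' where k': "k' \<in> Poly_Mapping.keys Q" "k = (y * fst k', snd k')" using keys_Uy[of y Q] by blast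
    then have "k' \<in> Kset n x" using Q by auto
    then show "k \<in> Kset n (x * y)" using k' by (auto simp: Kset_def mult_ac)
  qed
  then show "Uy y Q \<in> carrier (free_Abelian_group (Kset n (x * y)))" by simp
next
  fix Q1 Q2 show "Uy y (Q1 \<otimes>\<^bsub>free_Abelian_group (Kset n x)\<^esub> Q2) = Uy y Q1 \<otimes>\<^bsub>free_Abelian_group (Kset n (x * y))\<^esub> Uy y Q2"
    by (simp add: Uy_add)
qed

lemma EE_add: "EE (a + b) = EE a + EE b" by (simp add: EE_def frag_extend_add)

context hm
begin

lemma Ccoch_val: "f \<in> carrier (Ccoch A n) \<Longrightarrow> length xs = n \<Longrightarrow> f xs \<in> carrier (A (prod_list xs))"
  by (simp add: Ccoch_def)

lemma gval_carrier:
  assumes f: "f \<in> carrier (Ccoch A n)" and k: "k \<in> Kset n x"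
  shows "gval act f k \<in> carrier (A x)"
proof -
  obtain U vs where kk: "k = (U, vs)" by fastforce
  have l: "length vs = n" and x: "x = prod_list vs * U" using k kk by (auto simp: Kset_def mult.commute)
  have "f vs \<in> carrier (A (prod_list vs))" using Ccoch_val[OF f l] .
  then show ?thesis using act_closed x kk by (simp add: gval_def)
qed

lemma hF_prop:
  assumes f: "f \<in> carrier (Ccoch A n)"
  shows "hF A act n f x \<in> hom (free_Abelian_group (Kset n x)) (A x) \<and> (\<forall>k\<in>Kset n x. hF A act n f x (frag_of k) = gval act f k)"
proof -
  have sub: "gval act f ` Kset n x \<subseteq> carrier (A x)" using gval_carrier[OF f] by blast
  obtain h where h: "h \<in> hom (free_Abelian_group (Kset n x)) (A x)" "\<And>k. k \<in> Kset n x \<Longrightarrow> h (frag_of k) = gval act f k"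
    using comm_group.free_Abelian_group_universal[OF AG sub] by metis
  then have "\<exists>h. h \<in> hom (free_Abelian_group (Kset n x)) (A x) \<and> (\<forall>k\<in>Kset n x. h (frag_of k) = gval act f k)"
    by blast
  then show ?thesis unfolding hF_def by (rule someI_ex)
qed

lemma Psi_class:
  assumes r: "r \<in> carrier (bfree n x)"
  shows "Psi A act n f x (bclass n x r) = hF A act n f x (NN x r)"
  using bclass_carrier[OF r] some_rep[OF r] by (simp add: Psi_def)

lemma Psi_carrier:
  assumes f: "f \<in> carrier (Ccoch A n)"
  shows "Psi A act n f \<in> carrier (HomB A act n)"
  unfolding HomB_carrier_iff
proof (intro conjI allI impI)
  fix x :: 'm
  have hh: "hF A act n f x \<in> hom (free_Abelian_group (Kset n x)) (A x)" using hF_prop[OF f] by blast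
  show "Psi A act n f x \<in> hom (BZM n x) (A x)"
  proof (rule homI)
    fix c assume "c \<in> carrier (BZM n x)"
    then obtain r where r: "r \<in> carrier (bfree n x)" "c = bclass n x r" by (auto simp: carrier_BZM)
    show "Psi A act n f x c \<in> carrier (A x)"
      using r Psi_class[OF r(1)] hom_in_carrier[OF hh NN_free[OF r(1)]] by simp
  next
    fix c1 c2 assume "c1 \<in> carrier (BZM n x)" "c2 \<in> carrier (BZM n x)"
    then obtain r1 r2 where r: "r1 \<in> carrier (bfree n x)" "c1 = bclass n x r1" "r2 \<in> carrier (bfree n x)" "c2 = bclass n x r2"
      by (auto simp: carrier_BZM)
    have "Psi A act n f x (c1 \<otimes>\<^bsub>BZM n x\<^esub> c2) = hF A act n f x (NN x r1 \<otimes>\<^bsub>free_Abelian_group (Kset n x)\<^esub> NN x r2)"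
      using r mult_BZM[OF r(1) r(3)] Psi_class[OF bfree_add[OF r(1) r(3)]] by (simp add: NN_add)
    also have "\<dots> = hF A act n f x (NN x r1) \<otimes>\<^bsub>A x\<^esub> hF A act n f x (NN x r2)"
      by (rule hom_mult[OF hh NN_free[OF r(1)] NN_free[OF r(3)]])
    finally show "Psi A act n f x (c1 \<otimes>\<^bsub>BZM n x\<^esub> c2) = Psi A act n f x c1 \<otimes>\<^bsub>A x\<^esub> Psi A act n f x c2"
      using r Psi_class[OF r(1)] Psi_class[OF r(3)] by simp
  qed
  show "Psi A act n f x \<in> extensional (carrier (BZM n x))" by (simp add: Psi_def extensional_def)
next
  fix x y :: 'm and c assume c: "c \<in> carrier (BZM n x)"
  then obtain r where r: "r \<in> carrier (bfree n x)" "c = bclass n x r" by (auto simp: carrier_BZM)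
  have hx: "hF A act n f x \<in> hom (free_Abelian_group (Kset n x)) (A x)"
    and gx: "\<forall>k\<in>Kset n x. hF A act n f x (frag_of k) = gval act f k" using hF_prop[OF f] by blast+
  have hxy: "hF A act n f (x * y) \<in> hom (free_Abelian_group (Kset n (x * y))) (A (x * y))"
    and gxy: "\<forall>k\<in>Kset n (x * y). hF A act n f (x * y) (frag_of k) = gval act f k" using hF_prop[OF f] by blast+
  have L: "Psi A act n f (x * y) (BZM_act n x y c) = hF A act n f (x * y) (Uy y (NN x r))"
    using r BZM_act_class[OF r(1)] Psi_class[OF act_ext_carrier[OF r(1)]] by (simp add: NN_act_ext)
  have R: "act x y (Psi A act n f x c) = act x y (hF A act n f x (NN x r))"
    using r Psi_class[OF r(1)] by simp
  have h1: "(\<lambda>Q. hF A act n f (x * y) (Uy y Q)) \<in> hom (free_Abelian_group (Kset n x)) (A (x * y))"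
  proof (rule homI)
    fix Q assume "Q \<in> carrier (free_Abelian_group (Kset n x))"
    then show "hF A act n f (x * y) (Uy y Q) \<in> carrier (A (x * y))"
      using hom_in_carrier[OF hxy hom_in_carrier[OF Uy_hom]] by blast
  next
    fix Q1 Q2 assume q: "Q1 \<in> carrier (free_Abelian_group (Kset n x))" "Q2 \<in> carrier (free_Abelian_group (Kset n x))"
    have "Uy y (Q1 \<otimes>\<^bsub>free_Abelian_group (Kset n x)\<^esub> Q2) = Uy y Q1 \<otimes>\<^bsub>free_Abelian_group (Kset n (x * y))\<^esub> Uy y Q2"
      by (rule hom_mult[OF Uy_hom q])
    then show "hF A act n f (x * y) (Uy y (Q1 \<otimes>\<^bsub>free_Abelian_group (Kset n x)\<^esub> Q2)) =
        hF A act n f (x * y) (Uy y Q1) \<otimes>\<^bsub>A (x * y)\<^esub> hF A act n f (x * y) (Uy y Q2)"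
      using hom_mult[OF hxy hom_in_carrier[OF Uy_hom q(1)] hom_in_carrier[OF Uy_hom q(2)]] by simp
  qed
  have h2: "(\<lambda>Q. act x y (hF A act n f x Q)) \<in> hom (free_Abelian_group (Kset n x)) (A (x * y))"
  proof (rule homI)
    fix Q assume "Q \<in> carrier (free_Abelian_group (Kset n x))"
    then show "act x y (hF A act n f x Q) \<in> carrier (A (x * y))"
      using act_closed hom_in_carrier[OF hx] by blast
  next
    fix Q1 Q2 assume q: "Q1 \<in> carrier (free_Abelian_group (Kset n x))" "Q2 \<in> carrier (free_Abelian_group (Kset n x))"
    show "act x y (hF A act n f x (Q1 \<otimes>\<^bsub>free_Abelian_group (Kset n x)\<^esub> Q2)) =
       act x y (hF A act n f x Q1) \<otimes>\<^bsub>A (x * y)\<^esub> act x y (hF A act n f x Q2)"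
      using hom_mult[OF hx q] act_mult[OF hom_in_carrier[OF hx q(1)] hom_in_carrier[OF hx q(2)]] by simp
  qed
  have gen: "hF A act n f (x * y) (Uy y (frag_of k)) = act x y (hF A act n f x (frag_of k))" if k: "k \<in> Kset n x" for k
  proof -
    obtain U vs where kk: "k = (U, vs)" by fastforce
    have l: "length vs = n" and xe: "x = prod_list vs * U" using k kk by (auto simp: Kset_def mult.commute)
    have k2: "(y * U, vs) \<in> Kset n (x * y)" using k kk by (auto simp: Kset_def mult_ac)
    have fv: "f vs \<in> carrier (A (prod_list vs))" by (rule Ccoch_val[OF f l])
    have "hF A act n f (x * y) (Uy y (frag_of k)) = act (prod_list vs) (y * U) (f vs)"
      using gxy k2 kk by (simp add: Uy_of gval_def)
    also have "\<dots> = act (prod_list vs * U) y (act (prod_list vs) U (f vs))"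
      using act_comp[OF fv, of U y] by (simp add: mult.commute)
    also have "\<dots> = act x y (hF A act n f x (frag_of k))"
      using gx k kk xe by (simp add: gval_def)
    finally show ?thesis .
  qed
  have "hF A act n f (x * y) (Uy y (NN x r)) = act x y (hF A act n f x (NN x r))"
    using free_hom_eq[OF AGg h1 h2 gen, of "NN x r"] keys_NN[OF r(1)] by simp
  then show "Psi A act n f (x * y) (BZM_act n x y c) = act x y (Psi A act n f x c)"
    using L R by simp
qed

lemma hF_zero: "f \<in> carrier (Ccoch A n) \<Longrightarrow> hF A act n f x 0 = \<one>\<^bsub>A x\<^esub>"
  using hF_prop[of f n x] group_hom.hom_one[of "free_Abelian_group (Kset n x)" "A x" "hF A act n f x"]
  by (simp add: group_hom_def group_hom_axioms_def AGg)

lemma Phi_Psi: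
  assumes f: "f \<in> carrier (Ccoch A n)"
  shows "Phi n (Psi A act n f) = f"
proof (rule ext)
  fix xs :: "'m list"
  show "Phi n (Psi A act n f) xs = f xs"
  proof (cases "length xs = n")
    case False then show ?thesis using f by (simp add: Phi_def Ccoch_def)
  next
    case True
    have g: "frag_of (gen xs) \<in> carrier (bfree n (prod_list xs))" using bfree_of[OF gen_bwords[of xs]] True by simp
    have "Phi n (Psi A act n f) xs = hF A act n f (prod_list xs) (Nw (prod_list xs) (gen xs))"
      using True Psi_class[OF g] by (simp add: Phi_def)
    also have "\<dots> = f xs"
    proof (cases "xs = []")
      case True
      have k: "(1, []) \<in> Kset n 1" using True \<open>length xs = n\<close> by (simp add: Kset_def)
      have "hF A act n f 1 (frag_of (1, [])) = gval act f (1, [])"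
        using hF_prop[OF f, of 1] k by blast
      also have "\<dots> = act 1 1 (f [])" by (simp add: gval_def)
      also have "\<dots> = f []" using act_1 Ccoch_val[OF f, of "[]"] \<open>length xs = n\<close> True by simp
      finally show ?thesis using True by (simp add: Nw_def)
    next
      case False
      have nw: "Nw (prod_list xs) (gen xs) = Nz (frag_of (1, xs))"
        using False by (simp add: Nw_def Tw_gen del: Tw.simps)
      show ?thesis
      proof (cases "1 \<in> set xs")
        case True
        then show ?thesis using nw hF_zero[OF f] f \<open>length xs = n\<close> by (simp add: Nz_of Ccoch_def)
      next
        case False
        have k: "(1, xs) \<in> Kset n (prod_list xs)" using False \<open>length xs = n\<close> by (simp add: Kset_def)
        have "hF A act n f (prod_list xs) (frag_of (1, xs)) = gval act f (1, xs)"
          using hF_prop[OF f, of "prod_list xs"] k by blast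
        also have "\<dots> = act (prod_list xs) 1 (f xs)" by (simp add: gval_def)
        also have "\<dots> = f xs" using act_1 Ccoch_val[OF f \<open>length xs = n\<close>] by simp
        finally show ?thesis using nw False by (simp add: Nz_of)
      qed
    qed
    finally show ?thesis .
  qed
qed

lemma Psi_Phi:
  assumes p: "\<phi> \<in> carrier (HomB A act n)"
  shows "Psi A act n (Phi n \<phi>) = \<phi>"
proof (intro ext)
  fix x :: 'm and c
  have f: "Phi n \<phi> \<in> carrier (Ccoch A n)" by (rule Phi_carrier[OF p])
  have hp: "\<phi> x \<in> hom (BZM n x) (A x)" and ep: "\<phi> x \<in> extensional (carrier (BZM n x))"
    and nat: "\<And>x y c. c \<in> carrier (BZM n x) \<Longrightarrow> \<phi> (x * y) (BZM_act n x y c) = act x y (\<phi> x c)"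
    using p by (auto simp: HomB_carrier_iff)
  show "Psi A act n (Phi n \<phi>) x c = \<phi> x c"
  proof (cases "c \<in> carrier (BZM n x)")
    case False then show ?thesis using ep by (simp add: Psi_def extensional_def)
  next
    case True
    then obtain r where r: "r \<in> carrier (bfree n x)" "c = bclass n x r" by (auto simp: carrier_BZM)
    have kN: "Poly_Mapping.keys (NN x r) \<subseteq> Kset n x" by (rule keys_NN[OF r(1)])
    have EEc: "EE (NN x r) \<in> carrier (bfree n x)" by (rule EE_carrier[OF kN])
    have c2: "c = bclass n x (EE (NN x r))"
      using r bclass_eq_iff[OF r(1) EEc] NN_EE[OF kN] by simp
    have hh: "hF A act n (Phi n \<phi>) x \<in> hom (free_Abelian_group (Kset n x)) (A x)"
      and gg: "\<forall>k\<in>Kset n x. hF A act n (Phi n \<phi>) x (frag_of k) = gval act (Phi n \<phi>) k"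
      using hF_prop[OF f] by blast+
    have EEc': "EE Q \<in> carrier (bfree n x)" if "Q \<in> carrier (free_Abelian_group (Kset n x))" for Q
      using EE_carrier that by simp
    have h2: "(\<lambda>Q. \<phi> x (bclass n x (EE Q))) \<in> hom (free_Abelian_group (Kset n x)) (A x)"
    proof (rule homI)
      fix Q assume "Q \<in> carrier (free_Abelian_group (Kset n x))"
      then show "\<phi> x (bclass n x (EE Q)) \<in> carrier (A x)"
        using hom_in_carrier[OF hp bclass_carrier[OF EEc']] by blast
    next
      fix Q1 Q2 assume q: "Q1 \<in> carrier (free_Abelian_group (Kset n x))" "Q2 \<in> carrier (free_Abelian_group (Kset n x))"
      have "bclass n x (EE (Q1 \<otimes>\<^bsub>free_Abelian_group (Kset n x)\<^esub> Q2)) = bclass n x (EE Q1) \<otimes>\<^bsub>BZM n x\<^esub> bclass n x (EE Q2)"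
        using mult_BZM[OF EEc'[OF q(1)] EEc'[OF q(2)]] by (simp add: EE_add)
      then show "\<phi> x (bclass n x (EE (Q1 \<otimes>\<^bsub>free_Abelian_group (Kset n x)\<^esub> Q2))) =
          \<phi> x (bclass n x (EE Q1)) \<otimes>\<^bsub>A x\<^esub> \<phi> x (bclass n x (EE Q2))"
        using hom_mult[OF hp bclass_carrier[OF EEc'[OF q(1)]] bclass_carrier[OF EEc'[OF q(2)]]] by simp
    qed
    have gen: "hF A act n (Phi n \<phi>) x (frag_of k) = \<phi> x (bclass n x (EE (frag_of k)))" if k: "k \<in> Kset n x" for k
    proof -
      obtain U vs where kk: "k = (U, vs)" by fastforce
      define P where "P = prod_list vs"
      have l: "length vs = n" and xe: "x = P * U" using k kk by (auto simp: Kset_def mult.commute P_def)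
      have g: "frag_of (gen vs) \<in> carrier (bfree n P)" using bfree_of[OF gen_bwords[of vs]] l by (simp add: P_def)
      have c0: "bclass n P (frag_of (gen vs)) \<in> carrier (BZM n P)" by (rule bclass_carrier[OF g])
      have "\<phi> x (bclass n x (EE (frag_of k))) = \<phi> (P * U) (bclass n (P * U) (frag_of (act_word U (gen vs))))"
        using kk xe by (simp add: EE_def Ew_def)
      also have "\<dots> = \<phi> (P * U) (BZM_act n P U (bclass n P (frag_of (gen vs))))"
        using BZM_act_class[OF g, of U] by (simp add: act_ext_def)
      also have "\<dots> = act P U (\<phi> P (bclass n P (frag_of (gen vs))))" by (rule nat[OF c0])
      also have "\<dots> = gval act (Phi n \<phi>) k" using kk l by (simp add: gval_def Phi_def P_def)
      finally show ?thesis using gg k by simp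
    qed
    have "hF A act n (Phi n \<phi>) x (NN x r) = \<phi> x (bclass n x (EE (NN x r)))"
      using free_hom_eq[OF AGg hh h2 gen kN] by simp
    then show ?thesis using r c2 Psi_class[OF r(1)] by simp
  qed
qed

lemma Phi_bij: "bij_betw (Phi n) (carrier (HomB A act n)) (carrier (Ccoch A n))"
proof (rule bij_betwI[where g="Psi A act n"])
  show "Phi n \<in> carrier (HomB A act n) \<rightarrow> carrier (Ccoch A n)" using Phi_carrier by blast
  show "Psi A act n \<in> carrier (Ccoch A n) \<rightarrow> carrier (HomB A act n)" using Psi_carrier by blast
  show "\<And>x. x \<in> carrier (HomB A act n) \<Longrightarrow> Psi A act n (Phi n x) = x" by (rule Psi_Phi)
  show "\<And>y. y \<in> carrier (Ccoch A n) \<Longrightarrow> Phi n (Psi A act n y) = y" by (rule Phi_Psi)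
qed

end

lemma gen_mrg:
  assumes "1 \<le> i" "i < length xs"
  shows "take (i - 1) (gen xs) @ [(fst (gen xs ! (i - 1)) * fst (gen xs ! i), ZM_mult (snd (gen xs ! (i - 1))) (snd (gen xs ! i)))]
           @ drop (Suc i) (gen xs) = gen (mrg i xs)"
  using assms by (simp add: gen_def mrg_def take_map drop_map)

lemma last_gen: "xs \<noteq> [] \<Longrightarrow> last (gen xs) = (last xs, frag_of (1, last xs))"
  by (simp add: gen_def last_map)

lemma butlast_gen: "butlast (gen xs) = gen (butlast xs)"
  by (simp add: gen_def map_butlast)

context hm
begin

lemma psi_hom:
  assumes hp: "h \<in> hom (BZM n P) (A P)"
  shows "(\<lambda>r. h (bclass n P r)) \<in> hom (bfree n P) (A P)"
proof (rule homI)
  fix r assume "r \<in> carrier (bfree n P)"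
  then show "h (bclass n P r) \<in> carrier (A P)" using hom_in_carrier[OF hp bclass_carrier] by blast
next
  fix r s assume rs: "r \<in> carrier (bfree n P)" "s \<in> carrier (bfree n P)"
  show "h (bclass n P (r \<otimes>\<^bsub>bfree n P\<^esub> s)) = h (bclass n P r) \<otimes>\<^bsub>A P\<^esub> h (bclass n P s)"
    using mult_BZM[OF rs] hom_mult[OF hp bclass_carrier[OF rs(1)] bclass_carrier[OF rs(2)]]
    by (simp add: bfree_def)
qed

lemma psi_cmul:
  assumes hp: "h \<in> hom (BZM n P) (A P)" and r: "r \<in> carrier (bfree n P)"
  shows "h (bclass n P (frag_cmul k r)) = h (bclass n P r) [^]\<^bsub>A P\<^esub> k"
proof -
  have "frag_cmul k r = r [^]\<^bsub>bfree n P\<^esub> k" using r by (simp add: bfree_def)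
  then show ?thesis using hom_int_pow[OF psi_hom[OF hp] r bfree_group AGg] by simp
qed

lemma psi_add:
  assumes hp: "h \<in> hom (BZM n P) (A P)" and r: "r \<in> carrier (bfree n P)" and s: "s \<in> carrier (bfree n P)"
  shows "h (bclass n P (r + s)) = h (bclass n P r) \<otimes>\<^bsub>A P\<^esub> h (bclass n P s)"
  using hom_mult[OF psi_hom[OF hp] r s] by (simp add: bfree_def)

lemma psi_zero:
  assumes hp: "h \<in> hom (BZM n P) (A P)"
  shows "h (bclass n P 0) = \<one>\<^bsub>A P\<^esub>"
proof -
  have "bclass n P 0 = \<one>\<^bsub>BZM n P\<^esub>" by (simp add: one_BZM)
  then show ?thesis using hom_one_A[OF hp] by simp
qed

lemma psi_sum:
  assumes hp: "h \<in> hom (BZM n P) (A P)" and fin: "finite I" and f: "\<And>i. i \<in> I \<Longrightarrow> f i \<in> carrier (bfree n P)"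
  shows "h (bclass n P (sum f I)) = finprod (A P) (\<lambda>i. h (bclass n P (f i))) I"
  using fin f
proof (induction I rule: finite_induct)
  case empty
  interpret cg: comm_group "A P" by (rule AG)
  show ?case using psi_zero[OF hp] by simp
next
  case (insert i I)
  interpret cg: comm_group "A P" by (rule AG)
  have c: "(\<lambda>i. h (bclass n P (f i))) \<in> I \<rightarrow> carrier (A P)"
    using insert hom_in_carrier[OF hp bclass_carrier] by blast
  have ci: "h (bclass n P (f i)) \<in> carrier (A P)" using insert hom_in_carrier[OF hp bclass_carrier] by blast
  have sc: "sum f I \<in> carrier (bfree n P)" using insert by (intro bfree_sum) auto
  show ?case using insert psi_add[OF hp _ sc, of "f i"] cg.finprod_insert[OF insert(1,2) c ci] by simp
qed

lemma Phi_chain: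
  assumes p: "\<phi> \<in> carrier (HomB A act n)"
  shows "Phi (Suc n) (HomB_diff A n \<phi>) = Cdiff A act n (Phi n \<phi>)"
proof (rule ext)
  fix xs :: "'m list"
  have hp: "\<And>x. \<phi> x \<in> hom (BZM n x) (A x)"
    and nat: "\<And>x y c. c \<in> carrier (BZM n x) \<Longrightarrow> \<phi> (x * y) (BZM_act n x y c) = act x y (\<phi> x c)"
    using p by (auto simp: HomB_carrier_iff)
  show "Phi (Suc n) (HomB_diff A n \<phi>) xs = Cdiff A act n (Phi n \<phi>) xs"
  proof (cases "length xs = Suc n")
    case False
    then show ?thesis by (simp add: Phi_def Cdiff_def Ccoch_def)
  next
    case True
    define P where "P = prod_list xs"
    have g: "frag_of (gen xs) \<in> carrier (bfree (Suc n) P)" using bfree_of[OF gen_bwords[of xs]] True by (simp add: P_def)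
    have gw: "gen xs \<in> bwords (Suc n) P" using gen_bwords[of xs] True by (simp add: P_def)
    have L: "Phi (Suc n) (HomB_diff A n \<phi>) xs = \<phi> P (bclass n P (bar_diff_word (gen xs)))"
      using True bclass_carrier[OF g] BZM_diff_class[OF g]
      by (simp add: Phi_def HomB_diff_def P_def bd_ext_def)
    show ?thesis
    proof (cases "n = 0")
      case True
      have "bar_diff_word (gen xs) = 0" using bar_diff_word_0 gw True by simp
      then have "Phi (Suc n) (HomB_diff A n \<phi>) xs = \<one>\<^bsub>A P\<^esub>"
        using L psi_zero[OF hp[of P]] by simp
      then show ?thesis using True \<open>length xs = Suc n\<close> by (simp add: Cdiff_def Ccoch_def P_def)
    next
      case False
      then have n1: "1 \<le> n" by simp
      obtain v xs' where xs: "xs = v # xs'" using True by (cases xs) auto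
      have lxs': "length xs' = n" using True xs by simp
      have ne: "xs \<noteq> []" using xs by simp
      define f where "f = Phi n \<phi>"
      define W1 where "W1 = frag_of (act_word v (gen xs'))"
      have g': "frag_of (gen xs') \<in> carrier (bfree n (prod_list xs'))" using bfree_of[OF gen_bwords[of xs']] lxs' by simp
      have W1c: "W1 \<in> carrier (bfree n P)"
        using act_ext_carrier[OF g', of v] xs by (simp add: W1_def act_ext_def P_def mult.commute)
      have T1: "\<phi> P (bclass n P W1) = act (prod_list (tl xs)) (hd xs) (f (tl xs))"
      proof -
        have "\<phi> P (bclass n P W1) = \<phi> (prod_list xs' * v) (BZM_act n (prod_list xs') v (bclass n (prod_list xs') (frag_of (gen xs'))))"
          using BZM_act_class[OF g', of v] xs by (simp add: W1_def act_ext_def P_def mult.commute)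
        also have "\<dots> = act (prod_list xs') v (\<phi> (prod_list xs') (bclass n (prod_list xs') (frag_of (gen xs'))))"
          by (rule nat[OF bclass_carrier[OF g']])
        finally show ?thesis using xs lxs' by (simp add: f_def Phi_def)
      qed
      define Wm where "Wm i = frag_of (gen (mrg i xs))" for i
      have Wmc: "Wm i \<in> carrier (bfree n P)" if "i \<in> {1..<Suc n}" for i
      proof -
        have "gen (mrg i xs) \<in> bwords (length (mrg i xs)) (prod_list (mrg i xs))" by (rule gen_bwords)
        then show ?thesis using that True length_mrg[of i xs] prod_mrg[of i xs] by (simp add: Wm_def P_def bfree_of)
      qed
      have Tm: "\<phi> P (bclass n P (Wm i)) = f (take (i - 1) xs @ [xs!(i - 1) * xs!i] @ drop (Suc i) xs)"
        if "i \<in> {1..<Suc n}" for i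
        using that True length_mrg[of i xs] prod_mrg[of i xs] by (simp add: Wm_def P_def f_def Phi_def mrg_def)
      define WL where "WL = frag_of (act_word (last xs) (gen (butlast xs)))"
      have lbl: "length (butlast xs) = n" using True by simp
      have gb: "frag_of (gen (butlast xs)) \<in> carrier (bfree n (prod_list (butlast xs)))"
        using bfree_of[OF gen_bwords[of "butlast xs"]] lbl by simp
      have pb: "prod_list (butlast xs) * last xs = P"
      proof -
        have "xs = butlast xs @ [last xs]" using ne by simp
        then have "prod_list xs = prod_list (butlast xs) * last xs" by (metis prod_list.append prod_list.Cons prod_list.Nil mult_1_right)
        then show ?thesis by (simp add: P_def)
      qed
      have WLc: "WL \<in> carrier (bfree n P)"
        using act_ext_carrier[OF gb, of "last xs"] pb by (simp add: WL_def act_ext_def)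
      have TL: "\<phi> P (bclass n P WL) = act (prod_list (butlast xs)) (last xs) (f (butlast xs))"
      proof -
        have "\<phi> P (bclass n P WL) = \<phi> (prod_list (butlast xs) * last xs)
              (BZM_act n (prod_list (butlast xs)) (last xs) (bclass n (prod_list (butlast xs)) (frag_of (gen (butlast xs)))))"
          using BZM_act_class[OF gb, of "last xs"] pb by (simp add: WL_def act_ext_def)
        also have "\<dots> = act (prod_list (butlast xs)) (last xs) (\<phi> (prod_list (butlast xs)) (bclass n (prod_list (butlast xs)) (frag_of (gen (butlast xs)))))"
          by (rule nat[OF bclass_carrier[OF gb]])
        finally show ?thesis using lbl by (simp add: f_def Phi_def)
      qed
      have bdw: "bar_diff_word (gen xs) = W1 + (\<Sum>i\<in>{1..<Suc n}. frag_cmul ((-1) ^ i) (Wm i)) + frag_cmul ((-1) ^ Suc n) WL"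
      proof -
        have s: "(\<Sum>i\<in>{1..<length (gen xs)}. frag_cmul ((-1) ^ i)
          (frag_of (take (i - 1) (gen xs) @ [(fst (gen xs ! (i - 1)) * fst (gen xs ! i), ZM_mult (snd (gen xs ! (i - 1))) (snd (gen xs ! i)))] @ drop (Suc i) (gen xs))))
          = (\<Sum>i\<in>{1..<Suc n}. frag_cmul ((-1) ^ i) (Wm i))"
          using True gen_mrg[of _ xs] by (intro sum.cong) (auto simp: Wm_def)
        have h: "hd (gen xs) = (v, frag_of (1, v))" "tl (gen xs) = gen xs'" using xs by (simp_all add: gen_Cons)
        show ?thesis unfolding bar_diff_word_def s using h True ne
          by (simp add: W1_def WL_def last_gen butlast_gen)
      qed
      have sc: "(\<Sum>i\<in>{1..<Suc n}. frag_cmul ((-1) ^ i) (Wm i)) \<in> carrier (bfree n P)"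
        using Wmc by (intro bfree_sum bfree_cmul) auto
      have "Phi (Suc n) (HomB_diff A n \<phi>) xs =
            \<phi> P (bclass n P W1) \<otimes>\<^bsub>A P\<^esub> \<phi> P (bclass n P (\<Sum>i\<in>{1..<Suc n}. frag_cmul ((-1) ^ i) (Wm i)))
              \<otimes>\<^bsub>A P\<^esub> \<phi> P (bclass n P (frag_cmul ((-1) ^ Suc n) WL))"
        unfolding L bdw
        using psi_add[OF hp[of P] bfree_add[OF W1c sc] bfree_cmul[OF WLc]] psi_add[OF hp[of P] W1c sc] by simp
      also have "\<phi> P (bclass n P (\<Sum>i\<in>{1..<Suc n}. frag_cmul ((-1) ^ i) (Wm i)))
          = finprod (A P) (\<lambda>i. f (take (i - 1) xs @ [xs!(i - 1) * xs!i] @ drop (Suc i) xs) [^]\<^bsub>A P\<^esub> ((-1::int) ^ i)) {1..n}"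
      proof -
        have "\<phi> P (bclass n P (\<Sum>i\<in>{1..<Suc n}. frag_cmul ((-1) ^ i) (Wm i)))
            = finprod (A P) (\<lambda>i. \<phi> P (bclass n P (frag_cmul ((-1) ^ i) (Wm i)))) {1..<Suc n}"
          using Wmc by (intro psi_sum[OF hp[of P]]) (auto intro: bfree_cmul)
        also have "\<dots> = finprod (A P) (\<lambda>i. f (take (i - 1) xs @ [xs!(i - 1) * xs!i] @ drop (Suc i) xs) [^]\<^bsub>A P\<^esub> ((-1::int) ^ i)) {1..<Suc n}"
        proof (rule comm_monoid.finprod_cong'[OF comm_group.axioms(1)[OF AG]])
          show "{1..<Suc n} = {1..<Suc n}" by simp
        next
          fix i assume i: "i \<in> {1..<Suc n}"
          show "\<phi> P (bclass n P (frag_cmul ((-1) ^ i) (Wm i))) = f (take (i - 1) xs @ [xs!(i - 1) * xs!i] @ drop (Suc i) xs) [^]\<^bsub>A P\<^esub> ((-1::int) ^ i)"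
            using psi_cmul[OF hp[of P] Wmc[OF i]] Tm[OF i] by simp
        next
          show "(\<lambda>i. f (take (i - 1) xs @ [xs!(i - 1) * xs!i] @ drop (Suc i) xs) [^]\<^bsub>A P\<^esub> ((-1::int) ^ i)) \<in> {1..<Suc n} \<rightarrow> carrier (A P)"
          proof
            fix i assume i: "i \<in> {1..<Suc n}"
            have "\<phi> P (bclass n P (Wm i)) \<in> carrier (A P)" using hom_in_carrier[OF hp[of P] bclass_carrier[OF Wmc[OF i]]] .
            then show "f (take (i - 1) xs @ [xs!(i - 1) * xs!i] @ drop (Suc i) xs) [^]\<^bsub>A P\<^esub> ((-1::int) ^ i) \<in> carrier (A P)"
              using Tm[OF i] group.int_pow_closed[OF AGg] by simp
          qed
        qed
        also have "\<dots> = finprod (A P) (\<lambda>i. f (take (i - 1) xs @ [xs!(i - 1) * xs!i] @ drop (Suc i) xs) [^]\<^bsub>A P\<^esub> ((-1::int) ^ i)) {1..n}"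
          by (simp only: atLeastLessThanSuc_atLeastAtMost)
        finally show ?thesis .
      qed
      also have "\<phi> P (bclass n P (frag_cmul ((-1) ^ Suc n) WL)) = act (prod_list (butlast xs)) (last xs) (f (butlast xs)) [^]\<^bsub>A P\<^esub> ((-1::int) ^ Suc n)"
        using psi_cmul[OF hp[of P] WLc] TL by simp
      also note T1
      finally show ?thesis using True False by (simp add: Cdiff_def P_def f_def)
    qed
  qed
qed

end

theorem theorem5p2:
  fixes A :: "'m::comm_monoid_mult \<Rightarrow> 'a monoid" and act :: "'m \<Rightarrow> 'm \<Rightarrow> 'a \<Rightarrow> 'a" and n :: nat
  assumes "HM_module A act"
  shows "H_M1 A act n \<cong> C_M1 A act n"
proof -
  interpret hm A act by (rule hm.intro) (rule assms)
  show ?thesis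
    unfolding H_M1_def C_M1_def
  proof (rule cohomology_iso[where F = Phi])
    show "\<And>k. bij_betw (Phi k) (carrier (HomB A act k)) (carrier (Ccoch A k))" by (rule Phi_bij)
    show "\<And>x y. x \<in> carrier (HomB A act n) \<Longrightarrow> y \<in> carrier (HomB A act n) \<Longrightarrow>
        Phi n (x \<otimes>\<^bsub>HomB A act n\<^esub> y) = Phi n x \<otimes>\<^bsub>Ccoch A n\<^esub> Phi n y" by (rule Phi_mult)
    show "\<And>x y. x \<in> carrier (HomB A act n) \<Longrightarrow> y \<in> carrier (HomB A act n) \<Longrightarrow>
        x \<otimes>\<^bsub>HomB A act n\<^esub> y \<in> carrier (HomB A act n)" by (rule HomB_closed)
    show "\<And>k x. x \<in> carrier (HomB A act k) \<Longrightarrow> Phi (Suc k) (HomB_diff A k x) = Cdiff A act k (Phi k x)"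
      by (rule Phi_chain)
    show "\<And>k x. x \<in> carrier (HomB A act k) \<Longrightarrow> HomB_diff A k x \<in> carrier (HomB A act (Suc k))"
      by (rule HomB_diff_carrier)
    show "\<And>k. \<one>\<^bsub>HomB A act k\<^esub> \<in> carrier (HomB A act k)" by (rule HomB_one_carrier)
    show "\<And>k. Phi k \<one>\<^bsub>HomB A act k\<^esub> = \<one>\<^bsub>Ccoch A k\<^esub>" by (rule Phi_one)
  qed
qed

end
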